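(* Let $E$ be a graph, $K$ a field with involution, $R$ an involutive $K$-algebra, and $t$ a canonical, $K$-linear, $R$-valued trace on $L_K(E)$. Then $t$ is positive if and only if (P) $t\big(v-\sum_{e\in I}\mathbf{r}(e)\big)\ge 0$ for every vertex $v$ and every finite subset $I\subseteq\mathbf{s}^{-1}(v)$.
   Context: A (directed) graph $E=(E^0,E^1,\mathbf{s},\mathbf{r})$ has vertex set $E^0$, edge set $E^1$, source and range maps; no finiteness or countability is assumed. A path is a vertex $v$ (length $0$, $\mathbf{s}(v)=\mathbf{r}(v)=v$) or a sequence $p=e_1\cdots e_n$ of edges with $\mathbf{r}(e_i)=\mathbf{s}(e_{i+1})$, $\mathbf{s}(p)=\mathbf{s}(e_1)$, $\mathbf{r}(p)=\mathbf{r}(e_n)$. A vertex $v$ is regular if $\mathbf{s}^{-1}(v)$ is nonempty and finite. $K$ is a field with an arbitrary involution $a\mapsto a^*$ (possibly the identity). $L_K(E)$ is the free $K$-algebra generated by $E^0\cup E^1\cup\{e^*:e\in E^1\}$ subject to (V) $vw=\delta_{v,w}v$; (E1) $\mathbf{s}(e)e=e\mathbf{r}(e)=e$; (E2) $\mathbf{r}(e)e^*=e^*\mathbf{s}(e)=e^*$; (CK1) $e^*f=\delta_{e,f}\mathbf{r}(e)$; (CK2) $v=\sum_{e\in\mathbf{s}^{-1}(v)}ee^*$ for regular $v$; with $p^*=e_n^*\cdots e_1^*$, $v^*=v$, it is an involutive $K$-algebra via $(\sum a_ip_iq_i^* )^*=\sum a_i^*q_ip_i^*$. An involutive $K$-algebra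 is a $K$-algebra with an involution (additive, $(xy)^*=y^*x^*$, $x^{**}=x$) such that $(ax)^*=a^*x^*$ for $a\in K$. An element $x$ is positive, $x\ge0$, if it is a finite sum of elements $zz^*$; $x\ge y$ means $x-y\ge 0$. A trace is an additive map with $t(xy)=t(yx)$; $K$-linear means $t(ax)=at(x)$; $t$ is positive if $x\ge0$ implies $t(x)\ge0$. A trace $t$ on $L_K(E)$ is canonical if $t(pq^* )=\delta_{p,q}\,t(\mathbf{r}(p))$ for all paths $p,q$ with $\mathbf{r}(p)=\mathbf{r}(q)$. *)

theory Defs
  imports Main "Graph_Theory.Digraph"
begin

text \<open>A (directed) graph E = (E0, E1, s, r) is a pre_digraph G with verts G = E0,
  arcs G = E1, tail G = s (source) and head G = r (range), satisfying wf_digraph G.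
  No finiteness or countability is assumed.\<close>

definition regular_vertex :: "('v,'e) pre_digraph \<Rightarrow> 'v \<Rightarrow> bool" where
  "regular_vertex G v \<longleftrightarrow> out_arcs G v \<noteq> {} \<and> finite (out_arcs G v)"

text \<open>Paths: a pair (v, es); es = [] is the vertex path v (length 0), otherwise es
  is a nonempty sequence of edges e1...en with r(ei) = s(e(i+1)) and s(e1) = v.\<close>

definition is_path :: "('v,'e) pre_digraph \<Rightarrow> 'v \<times> 'e list \<Rightarrow> bool" where
  "is_path G p \<longleftrightarrow> (case p of (v, es) \<Rightarrow>
      v \<in> verts G \<and> set es \<subseteq> arcs G \<and>
      (es \<noteq> [] \<longrightarrow> tail G (hd es) = v) \<and>
      (\<forall>i. Suc i < length es \<longrightarrow> head G (es ! i) = tail G (es ! Suc i)))"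

definition path_range :: "('v,'e) pre_digraph \<Rightarrow> 'v \<times> 'e list \<Rightarrow> 'v" where
  "path_range G p = (case p of (v, es) \<Rightarrow> if es = [] then v else head G (last es))"

definition field_involution :: "('k::field \<Rightarrow> 'k) \<Rightarrow> bool" where
  "field_involution cj \<longleftrightarrow>
     (\<forall>a b. cj (a + b) = cj a + cj b) \<and> (\<forall>a b. cj (a * b) = cj a * cj b) \<and>
     (\<forall>a. cj (cj a) = a)"

definition involutive_algebra ::
  "('k::field \<Rightarrow> 'k) \<Rightarrow> ('k \<Rightarrow> 'r::ring \<Rightarrow> 'r) \<Rightarrow> ('r \<Rightarrow> 'r) \<Rightarrow> bool" where
  "involutive_algebra cj sm st \<longleftrightarrow>
     (\<forall>a x y. sm a (x + y) = sm a x + sm a y) \<and>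
     (\<forall>a b x. sm (a + b) x = sm a x + sm b x) \<and>
     (\<forall>a b x. sm (a * b) x = sm a (sm b x)) \<and>
     (\<forall>x. sm 1 x = x) \<and>
     (\<forall>a x y. sm a (x * y) = sm a x * y) \<and>
     (\<forall>a x y. sm a (x * y) = x * sm a y) \<and>
     (\<forall>x y. st (x + y) = st x + st y) \<and>
     (\<forall>x y. st (x * y) = st y * st x) \<and>
     (\<forall>x. st (st x) = x) \<and>
     (\<forall>a x. st (sm a x) = sm (cj a) (st x))"

definition is_positive ::
  "'a set \<Rightarrow> ('a \<Rightarrow> 'a \<Rightarrow> 'a) \<Rightarrow> 'a \<Rightarrow> ('a \<Rightarrow> 'a \<Rightarrow> 'a) \<Rightarrow> ('a \<Rightarrow> 'a) \<Rightarrow> 'a \<Rightarrow> bool" where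
  "is_positive S add zero mul st x \<longleftrightarrow>
     (\<exists>zs. set zs \<subseteq> S \<and> x = foldr (\<lambda>z acc. add (mul z (st z)) acc) zs zero)"

abbreviation ring_positive :: "('r::ring \<Rightarrow> 'r) \<Rightarrow> 'r \<Rightarrow> bool" where
  "ring_positive st x \<equiv> is_positive UNIV (+) 0 (*) st x"

datatype ('v,'e) gen = GV 'v | GE 'e | GG 'e  (* vertex, edge, ghost edge e^* *)

definition valid_gen :: "('v,'e) pre_digraph \<Rightarrow> ('v,'e) gen \<Rightarrow> bool" where
  "valid_gen G g = (case g of GV v \<Rightarrow> v \<in> verts G | GE e \<Rightarrow> e \<in> arcs G | GG e \<Rightarrow> e \<in> arcs G)"

type_synonym ('v,'e,'k) fa = "('v,'e) gen list \<Rightarrow> 'k"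

text \<open>Elements of the free non-unital algebra: finitely supported K-valued functions on
  nonempty words in the generators.\<close>

definition FA :: "('v,'e) pre_digraph \<Rightarrow> ('v,'e,'k::field) fa set" where
  "FA G = {f. f [] = 0 \<and> finite {w. f w \<noteq> 0} \<and>
              (\<forall>w. f w \<noteq> 0 \<longrightarrow> (\<forall>g\<in>set w. valid_gen G g))}"

definition fzero :: "('v,'e,'k::field) fa" where "fzero = (\<lambda>w. 0)"
definition fadd :: "('v,'e,'k::field) fa \<Rightarrow> ('v,'e,'k) fa \<Rightarrow> ('v,'e,'k) fa" where
  "fadd f g = (\<lambda>w. f w + g w)"
definition fsub :: "('v,'e,'k::field) fa \<Rightarrow> ('v,'e,'k) fa \<Rightarrow> ('v,'e,'k) fa" where
  "fsub f g = (\<lambda>w. f w - g w)"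
definition fsmult :: "'k::field \<Rightarrow> ('v,'e,'k) fa \<Rightarrow> ('v,'e,'k) fa" where
  "fsmult a f = (\<lambda>w. a * f w)"
definition fmul :: "('v,'e,'k::field) fa \<Rightarrow> ('v,'e,'k) fa \<Rightarrow> ('v,'e,'k) fa" where
  "fmul f g = (\<lambda>w. \<Sum>i\<le>length w. f (take i w) * g (drop i w))"
definition mono :: "('v,'e) gen list \<Rightarrow> ('v,'e,'k::field) fa" where
  "mono u = (\<lambda>w. if w = u then 1 else 0)"

fun gstar :: "('v,'e) gen \<Rightarrow> ('v,'e) gen" where
  "gstar (GV v) = GV v" | "gstar (GE e) = GG e" | "gstar (GG e) = GE e"

definition wstar :: "('v,'e) gen list \<Rightarrow> ('v,'e) gen list" where
  "wstar w = rev (map gstar w)"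

definition fstar :: "('k::field \<Rightarrow> 'k) \<Rightarrow> ('v,'e,'k) fa \<Rightarrow> ('v,'e,'k) fa" where
  "fstar cj f = (\<lambda>w. cj (f (wstar w)))"

inductive_set lpa_rels :: "('v,'e) pre_digraph \<Rightarrow> ('v,'e,'k::field) fa set" for G where
  relV: "v \<in> verts G \<Longrightarrow> w \<in> verts G \<Longrightarrow>
     fsub (mono [GV v, GV w]) (if v = w then mono [GV v] else fzero) \<in> lpa_rels G"
| relE1a: "e \<in> arcs G \<Longrightarrow> fsub (mono [GV (tail G e), GE e]) (mono [GE e]) \<in> lpa_rels G"
| relE1b: "e \<in> arcs G \<Longrightarrow> fsub (mono [GE e, GV (head G e)]) (mono [GE e]) \<in> lpa_rels G"
| relE2a: "e \<in> arcs G \<Longrightarrow> fsub (mono [GV (head G e), GG e]) (mono [GG e]) \<in> lpa_rels G"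
| relE2b: "e \<in> arcs G \<Longrightarrow> fsub (mono [GG e, GV (tail G e)]) (mono [GG e]) \<in> lpa_rels G"
| relCK1: "e \<in> arcs G \<Longrightarrow> f \<in> arcs G \<Longrightarrow>
     fsub (mono [GG e, GE f]) (if e = f then mono [GV (head G e)] else fzero) \<in> lpa_rels G"
| relCK2: "v \<in> verts G \<Longrightarrow> regular_vertex G v \<Longrightarrow>
     fsub (mono [GV v]) (\<lambda>w. \<Sum>e\<in>out_arcs G v. mono [GE e, GG e] w) \<in> lpa_rels G"

inductive_set lpa_ideal :: "('v,'e) pre_digraph \<Rightarrow> ('v,'e,'k::field) fa set" for G where
  gen: "x \<in> lpa_rels G \<Longrightarrow> x \<in> lpa_ideal G"
| zero: "fzero \<in> lpa_ideal G"
| add: "x \<in> lpa_ideal G \<Longrightarrow> y \<in> lpa_ideal G \<Longrightarrow> fadd x y \<in> lpa_ideal G"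
| smult: "x \<in> lpa_ideal G \<Longrightarrow> fsmult a x \<in> lpa_ideal G"
| mult_left: "x \<in> lpa_ideal G \<Longrightarrow> y \<in> FA G \<Longrightarrow> fmul y x \<in> lpa_ideal G"
| mult_right: "x \<in> lpa_ideal G \<Longrightarrow> y \<in> FA G \<Longrightarrow> fmul x y \<in> lpa_ideal G"

text \<open>Elements of L_K(E) are the cosets x + I of the ideal, x in the free algebra.\<close>

type_synonym ('v,'e,'k) lpa = "('v,'e,'k) fa set"

definition lcls :: "('v,'e) pre_digraph \<Rightarrow> ('v,'e,'k::field) fa \<Rightarrow> ('v,'e,'k) lpa" where
  "lcls G x = {y \<in> FA G. fsub x y \<in> lpa_ideal G}"

definition LPA :: "('v,'e) pre_digraph \<Rightarrow> ('v,'e,'k::field) lpa set" where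
  "LPA G = lcls G ` FA G"

definition lrep :: "('v,'e,'k::field) lpa \<Rightarrow> ('v,'e,'k) fa" where
  "lrep X = (SOME x. x \<in> X)"

definition lzero :: "('v,'e) pre_digraph \<Rightarrow> ('v,'e,'k::field) lpa" where
  "lzero G = lcls G fzero"
definition ladd :: "('v,'e) pre_digraph \<Rightarrow> ('v,'e,'k::field) lpa \<Rightarrow> ('v,'e,'k) lpa \<Rightarrow> ('v,'e,'k) lpa" where
  "ladd G X Y = lcls G (fadd (lrep X) (lrep Y))"
definition lsub :: "('v,'e) pre_digraph \<Rightarrow> ('v,'e,'k::field) lpa \<Rightarrow> ('v,'e,'k) lpa \<Rightarrow> ('v,'e,'k) lpa" where
  "lsub G X Y = lcls G (fsub (lrep X) (lrep Y))"
definition lmul :: "('v,'e) pre_digraph \<Rightarrow> ('v,'e,'k::field) lpa \<Rightarrow> ('v,'e,'k) lpa \<Rightarrow> ('v,'e,'k) lpa" where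
  "lmul G X Y = lcls G (fmul (lrep X) (lrep Y))"
definition lsmult :: "('v,'e) pre_digraph \<Rightarrow> 'k::field \<Rightarrow> ('v,'e,'k) lpa \<Rightarrow> ('v,'e,'k) lpa" where
  "lsmult G a X = lcls G (fsmult a (lrep X))"
definition lstar :: "('v,'e) pre_digraph \<Rightarrow> ('k::field \<Rightarrow> 'k) \<Rightarrow> ('v,'e,'k) lpa \<Rightarrow> ('v,'e,'k) lpa" where
  "lstar G cj X = lcls G (fstar cj (lrep X))"

text \<open>Vertex v, and the sum over a finite set I of edges of r(e) (with multiplicity:
  one summand per edge), as elements of L_K(E).\<close>

definition lvert :: "('v,'e) pre_digraph \<Rightarrow> 'v \<Rightarrow> ('v,'e,'k::field) lpa" where
  "lvert G v = lcls G (mono [GV v])"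

definition lrange_sum :: "('v,'e) pre_digraph \<Rightarrow> 'e set \<Rightarrow> ('v,'e,'k::field) lpa" where
  "lrange_sum G I = lcls G (\<lambda>w. \<Sum>e\<in>I. mono [GV (head G e)] w)"

definition lpath :: "('v,'e) pre_digraph \<Rightarrow> 'v \<times> 'e list \<Rightarrow> ('v,'e,'k::field) lpa" where
  "lpath G p = (case p of (v, es) \<Rightarrow>
      if es = [] then lvert G v else foldr (\<lambda>e acc. lmul G (lcls G (mono [GE e])) acc)
                                           (butlast es) (lcls G (mono [GE (last es)])))"

definition lpa_trace ::
  "('v,'e) pre_digraph \<Rightarrow> (('v,'e,'k::field) lpa \<Rightarrow> 'r::ring) \<Rightarrow> bool" where
  "lpa_trace G t \<longleftrightarrow>
     (\<forall>X\<in>LPA G. \<forall>Y\<in>LPA G. t (ladd G X Y) = t X + t Y) \<and>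
     (\<forall>X\<in>LPA G. \<forall>Y\<in>LPA G. t (lmul G X Y) = t (lmul G Y X))"

definition lpa_trace_K_linear ::
  "('v,'e) pre_digraph \<Rightarrow> ('k::field \<Rightarrow> 'r::ring \<Rightarrow> 'r) \<Rightarrow> (('v,'e,'k) lpa \<Rightarrow> 'r) \<Rightarrow> bool" where
  "lpa_trace_K_linear G sm t \<longleftrightarrow> (\<forall>a. \<forall>X\<in>LPA G. t (lsmult G a X) = sm a (t X))"

definition lpa_trace_canonical ::
  "('v,'e) pre_digraph \<Rightarrow> ('k::field \<Rightarrow> 'k) \<Rightarrow> (('v,'e,'k) lpa \<Rightarrow> 'r::ring) \<Rightarrow> bool" where
  "lpa_trace_canonical G cj t \<longleftrightarrow>
     (\<forall>p q. is_path G p \<longrightarrow> is_path G q \<longrightarrow> path_range G p = path_range G q \<longrightarrow>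
        t (lmul G (lpath G p) (lstar G cj (lpath G q))) =
          (if p = q then t (lvert G (path_range G p)) else 0))"

definition lpa_trace_positive ::
  "('v,'e) pre_digraph \<Rightarrow> ('k::field \<Rightarrow> 'k) \<Rightarrow> ('r::ring \<Rightarrow> 'r) \<Rightarrow> (('v,'e,'k) lpa \<Rightarrow> 'r) \<Rightarrow> bool" where
  "lpa_trace_positive G cj st t \<longleftrightarrow>
     (\<forall>X\<in>LPA G. is_positive (LPA G) (ladd G) (lzero G) (lmul G) (lstar G cj) X
                 \<longrightarrow> ring_positive st (t X))"

end

theory Submission
  imports Defs
begin


definition lc :: "'i set \<Rightarrow> ('i \<Rightarrow> 'k::field) \<Rightarrow> ('i \<Rightarrow> ('v,'e,'k) fa) \<Rightarrow> ('v,'e,'k) fa" where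
  "lc A c f = (\<lambda>w. \<Sum>i\<in>A. c i * f i w)"

definition vw :: "('v,'e) pre_digraph \<Rightarrow> ('v,'e) gen list \<Rightarrow> bool" where
  "vw G w \<longleftrightarrow> (\<forall>g\<in>set w. valid_gen G g)"

lemma vw_simps[simp]: "vw G [] " "vw G (g # w) \<longleftrightarrow> valid_gen G g \<and> vw G w"
  "vw G (u @ w) \<longleftrightarrow> vw G u \<and> vw G w"
  by (auto simp: vw_def)

lemma valid_gen_simps[simp]: "valid_gen G (GV v) = (v \<in> verts G)"
  "valid_gen G (GE e) = (e \<in> arcs G)" "valid_gen G (GG e) = (e \<in> arcs G)"
  by (auto simp: valid_gen_def)

lemma vw_map[simp]: "vw G (map GE es) \<longleftrightarrow> set es \<subseteq> arcs G" "vw G (map GG es) \<longleftrightarrow> set es \<subseteq> arcs G"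
  by (auto simp: vw_def)

lemma cj_props:
  assumes "field_involution cj"
  shows "cj 0 = 0" "cj 1 = 1" "\<And>a. cj (- a) = - cj a" "\<And>a b. cj (a + b) = cj a + cj b"
    "\<And>a b. cj (a * b) = cj a * cj b" "\<And>a. cj (cj a) = a" "\<And>a b. cj (a - b) = cj a - cj b"
proof -
  have add: "\<And>a b. cj (a + b) = cj a + cj b" and mul: "\<And>a b. cj (a * b) = cj a * cj b"
    and inv: "\<And>a. cj (cj a) = a" using assms by (auto simp: field_involution_def)
  have "cj 0 = cj 0 + cj 0" using add[of 0 0] by simp
  then show z: "cj 0 = 0" by (metis add.right_neutral add_left_cancel)
  have "cj 1 = cj 1 * cj 1" using mul[of 1 1] by simp
  moreover have "cj 1 \<noteq> 0" using inv[of 1] z by auto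
  ultimately show "cj 1 = 1" by (metis mult_cancel_right1)
  show neg: "\<And>a. cj (- a) = - cj a" using add z by (metis add.right_inverse add_eq_0_iff)
  show "\<And>a b. cj (a + b) = cj a + cj b" "\<And>a b. cj (a * b) = cj a * cj b" "\<And>a. cj (cj a) = a"
    by (fact add mul inv)+
  show "\<And>a b. cj (a - b) = cj a - cj b" using add neg by (metis diff_conv_add_uminus)
qed

lemma cj_sum: "field_involution cj \<Longrightarrow> cj (sum f A) = (\<Sum>i\<in>A. cj (f i))"
  by (induction A rule: infinite_finite_induct) (auto simp: cj_props)

lemma gstar_gstar[simp]: "gstar (gstar g) = g" by (cases g) auto
lemma wstar_wstar[simp]: "wstar (wstar w) = w" by (simp add: wstar_def rev_map[symmetric] comp_def)
lemma wstar_append[simp]: "wstar (a @ b) = wstar b @ wstar a" by (simp add: wstar_def)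
lemma wstar_Nil[simp]: "wstar [] = []" by (simp add: wstar_def)
lemma wstar_Cons: "wstar (g # w) = wstar w @ [gstar g]" by (simp add: wstar_def)
lemma wstar_length[simp]: "length (wstar w) = length w" by (simp add: wstar_def)
lemma wstar_eq_iff[simp]: "wstar a = wstar b \<longleftrightarrow> a = b" by (metis wstar_wstar)
lemma wstar_Nil_iff[simp]: "wstar a = [] \<longleftrightarrow> a = []" by (simp add: wstar_def)
lemma wstar_take: "wstar (take i w) = drop (length w - i) (wstar w)"
  by (simp add: wstar_def rev_take take_map[symmetric])
lemma wstar_drop: "wstar (drop i w) = take (length w - i) (wstar w)"
  by (simp add: wstar_def rev_drop drop_map[symmetric])
lemma vw_wstar[simp]: "vw G (wstar w) \<longleftrightarrow> vw G w"
proof -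
  have "valid_gen G (gstar g) = valid_gen G g" for g by (cases g) auto
  then show ?thesis by (auto simp: vw_def wstar_def)
qed
lemma wstar_map_GE[simp]: "wstar (map GE es) = map GG (rev es)" by (simp add: wstar_def rev_map)
lemma wstar_map_GG[simp]: "wstar (map GG es) = map GE (rev es)" by (simp add: wstar_def rev_map)
lemma wstar_single[simp]: "wstar [g] = [gstar g]" by (simp add: wstar_def)

lemma fsub_eq: "fsub f g = fadd f (fsmult (-1) g)"
  by (simp add: fsub_def fadd_def fsmult_def fun_eq_iff)

lemma take_drop_eq_iff: "i \<le> length w \<Longrightarrow> (take i w = u \<and> drop i w = v) \<longleftrightarrow> (w = u @ v \<and> i = length u)"
  by (metis append_eq_conv_conj length_take min.absorb2)

lemma fmul_mono: "fmul (mono u) (mono v) = mono (u @ v)"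
proof
  fix w
  have "fmul (mono u) (mono v) w = (\<Sum>i\<le>length w. if i = length u \<and> w = u @ v then 1 else 0)"
    unfolding fmul_def mono_def
    by (rule sum.cong) (auto simp: take_drop_eq_iff)
  also have "\<dots> = mono (u @ v) w" by (auto simp: mono_def)
  finally show "fmul (mono u) (mono v) w = mono (u @ v) w" .
qed

lemma fmul_lc_left: "fmul (lc A c f) g = lc A c (\<lambda>i. fmul (f i) g)"
  unfolding fmul_def lc_def
  by (auto simp: fun_eq_iff sum_distrib_left sum_distrib_right mult.assoc intro: sum.swap)

lemma fmul_lc_right: "fmul g (lc A c f) = lc A c (\<lambda>i. fmul g (f i))"
  unfolding fmul_def lc_def
  by (auto simp: fun_eq_iff sum_distrib_left sum_distrib_right mult.assoc mult.left_commute intro: sum.swap)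

lemma fmul_fzero[simp]: "fmul fzero g = fzero" "fmul g fzero = fzero"
  by (auto simp: fmul_def fzero_def fun_eq_iff)

lemma fmul_fadd: "fmul (fadd a b) c = fadd (fmul a c) (fmul b c)" "fmul c (fadd a b) = fadd (fmul c a) (fmul c b)"
  by (auto simp: fmul_def fadd_def fun_eq_iff sum.distrib algebra_simps)

lemma fmul_fsub: "fmul (fsub a b) c = fsub (fmul a c) (fmul b c)" "fmul c (fsub a b) = fsub (fmul c a) (fmul c b)"
  by (auto simp: fmul_def fsub_def fun_eq_iff sum_subtractf algebra_simps)

lemma fmul_fsmult: "fmul (fsmult a f) g = fsmult a (fmul f g)" "fmul g (fsmult a f) = fsmult a (fmul g f)"
  by (auto simp: fmul_def fsmult_def fun_eq_iff sum_distrib_left algebra_simps)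

lemma fmul_mono_Nil: "fmul (mono []) g = g" "fmul g (mono []) = g"
proof -
  show "fmul (mono []) g = g"
  proof
    fix w show "fmul (mono []) g w = g w"
      unfolding fmul_def mono_def
      by (subst sum.mono_neutral_right[of "{..length w}" "{0}"]) auto
  qed
  show "fmul g (mono []) = g"
  proof
    fix w show "fmul g (mono []) w = g w"
      unfolding fmul_def mono_def
      by (subst sum.mono_neutral_right[of "{..length w}" "{length w}"]) auto
  qed
qed

lemma lc_insert: "finite A \<Longrightarrow> a \<notin> A \<Longrightarrow> lc (insert a A) c f = fadd (fsmult (c a) (f a)) (lc A c f)"
  by (auto simp: lc_def fadd_def fsmult_def fun_eq_iff)
lemma lc_empty[simp]: "lc {} c f = fzero" by (simp add: lc_def fzero_def)

lemma lc_fsub: "fsub (lc A c f) (lc A c g) = lc A c (\<lambda>i. fsub (f i) (g i))"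
  by (auto simp: lc_def fsub_def fun_eq_iff sum_subtractf algebra_simps)

lemma FA_I: "f [] = 0 \<Longrightarrow> finite {w. f w \<noteq> 0} \<Longrightarrow> (\<And>w. f w \<noteq> 0 \<Longrightarrow> vw G w) \<Longrightarrow> f \<in> FA G"
  by (auto simp: FA_def vw_def)
lemma FA_D: "f \<in> FA G \<Longrightarrow> f [] = 0" "f \<in> FA G \<Longrightarrow> finite {w. f w \<noteq> 0}" "f \<in> FA G \<Longrightarrow> f w \<noteq> 0 \<Longrightarrow> vw G w"
  by (auto simp: FA_def vw_def)

lemma fzero_FA[simp]: "fzero \<in> FA G" by (auto simp: FA_def fzero_def)

lemma mono_FA: "w \<noteq> [] \<Longrightarrow> vw G w \<Longrightarrow> mono w \<in> FA G"
  by (rule FA_I) (auto simp: mono_def split: if_splits)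

lemma fadd_FA: "f \<in> FA G \<Longrightarrow> g \<in> FA G \<Longrightarrow> fadd f g \<in> FA G"
  apply (rule FA_I)
  apply (auto simp: fadd_def FA_D)
  apply (rule finite_subset[of _ "{w. f w \<noteq> 0} \<union> {w. g w \<noteq> 0}"])
  apply (auto simp: FA_D)
  by (metis FA_D(3) add.left_neutral)

lemma fsmult_FA: assumes "f \<in> FA G" shows "fsmult a f \<in> FA G"
proof (rule FA_I)
  show "fsmult a f [] = 0" using assms by (simp add: fsmult_def FA_D)
  show "finite {w. fsmult a f w \<noteq> 0}"
    by (rule finite_subset[of _ "{w. f w \<noteq> 0}"]) (use FA_D(2)[OF assms] in \<open>auto simp: fsmult_def\<close>)
  show "fsmult a f w \<noteq> 0 \<Longrightarrow> vw G w" for w using assms FA_D(3) by (force simp: fsmult_def)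
qed

lemma fsub_FA: "f \<in> FA G \<Longrightarrow> g \<in> FA G \<Longrightarrow> fsub f g \<in> FA G"
  by (simp add: fsub_eq fadd_FA fsmult_FA)

lemma lc_FA: "finite A \<Longrightarrow> (\<And>i. i \<in> A \<Longrightarrow> f i \<in> FA G) \<Longrightarrow> lc A c f \<in> FA G"
proof (induction A rule: finite_induct)
  case empty then show ?case by simp
next
  case (insert a A) then show ?case by (simp add: lc_insert fadd_FA fsmult_FA)
qed

lemma fmul_FA: assumes "f \<in> FA G" "g \<in> FA G" shows "fmul f g \<in> FA G"
proof (rule FA_I)
  show "fmul f g [] = 0" using assms by (simp add: fmul_def FA_D)
  have sub: "{w. fmul f g w \<noteq> 0} \<subseteq> (\<lambda>(a,b). a @ b) ` ({w. f w \<noteq> 0} \<times> {w. g w \<noteq> 0})"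
  proof
    fix w assume "w \<in> {w. fmul f g w \<noteq> 0}"
    then obtain i where "f (take i w) * g (drop i w) \<noteq> 0" unfolding fmul_def
      by (metis (mono_tags, lifting) mem_Collect_eq sum.neutral)
    then show "w \<in> (\<lambda>(a,b). a @ b) ` ({w. f w \<noteq> 0} \<times> {w. g w \<noteq> 0})"
      by (auto intro!: image_eqI[of _ _ "(take i w, drop i w)"])
  qed
  show "finite {w. fmul f g w \<noteq> 0}"
    by (rule finite_subset[OF sub]) (use FA_D(2)[OF assms(1)] FA_D(2)[OF assms(2)] in \<open>auto intro!: finite_imageI finite_cartesian_product\<close>)
  fix w assume "fmul f g w \<noteq> 0"
  then obtain i where "f (take i w) * g (drop i w) \<noteq> 0" unfolding fmul_def
    by (metis (mono_tags, lifting) sum.neutral)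
  then have "vw G (take i w)" "vw G (drop i w)" using assms FA_D(3) by force+
  then show "vw G w" by (metis append_take_drop_id vw_simps(3))
qed

lemma fstar_FA: assumes "field_involution cj" "f \<in> FA G" shows "fstar cj f \<in> FA G"
proof (rule FA_I)
  show "fstar cj f [] = 0" using assms by (simp add: fstar_def FA_D cj_props)
  have "{w. fstar cj f w \<noteq> 0} \<subseteq> wstar ` {w. f w \<noteq> 0}"
  proof
    fix w assume "w \<in> {w. fstar cj f w \<noteq> 0}"
    then have "f (wstar w) \<noteq> 0" using assms by (auto simp: fstar_def cj_props)
    then show "w \<in> wstar ` {w. f w \<noteq> 0}" by (auto intro!: image_eqI[of _ _ "wstar w"])
  qed
  then show "finite {w. fstar cj f w \<noteq> 0}" using assms FA_D finite_subset by blast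
  fix w assume "fstar cj f w \<noteq> 0"
  then have "f (wstar w) \<noteq> 0" using assms by (auto simp: fstar_def cj_props)
  then show "vw G w" using assms FA_D(3) vw_wstar by metis
qed

lemma fstar_mono: "field_involution cj \<Longrightarrow> fstar cj (mono w) = mono (wstar w)"
  by (auto simp: fstar_def mono_def fun_eq_iff cj_props)
lemma fstar_fzero: "field_involution cj \<Longrightarrow> fstar cj fzero = fzero"
  by (auto simp: fstar_def fzero_def cj_props)
lemma fstar_fadd: "field_involution cj \<Longrightarrow> fstar cj (fadd f g) = fadd (fstar cj f) (fstar cj g)"
  by (auto simp: fstar_def fadd_def fun_eq_iff cj_props)
lemma fstar_fsub: "field_involution cj \<Longrightarrow> fstar cj (fsub f g) = fsub (fstar cj f) (fstar cj g)"
  by (auto simp: fstar_def fsub_def fun_eq_iff cj_props)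
lemma fstar_fsmult: "field_involution cj \<Longrightarrow> fstar cj (fsmult a f) = fsmult (cj a) (fstar cj f)"
  by (auto simp: fstar_def fsmult_def fun_eq_iff cj_props)
lemma fstar_lc: "field_involution cj \<Longrightarrow> fstar cj (lc A c f) = lc A (\<lambda>i. cj (c i)) (\<lambda>i. fstar cj (f i))"
  by (auto simp: fstar_def lc_def fun_eq_iff cj_props cj_sum)

lemma fstar_fmul: fixes f g :: "('v,'e,'k::field) fa" assumes "field_involution cj" shows "fstar cj (fmul f g) = fmul (fstar cj g) (fstar cj f)"
proof
  fix w :: "('v,'e) gen list"
  let ?n = "length w" and ?w = "wstar w"
  have "fstar cj (fmul f g) w = (\<Sum>i\<le>?n. cj (f (take i ?w)) * cj (g (drop i ?w)))"
    using assms by (simp add: fstar_def fmul_def cj_sum cj_props)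
  also have "\<dots> = (\<Sum>i\<le>?n. cj (f (take (?n - i) ?w)) * cj (g (drop (?n - i) ?w)))"
  proof -
    have "(\<Sum>i<Suc ?n. (\<lambda>i. cj (f (take i ?w)) * cj (g (drop i ?w))) (Suc ?n - Suc i))
        = (\<Sum>i<Suc ?n. cj (f (take i ?w)) * cj (g (drop i ?w)))"
      by (rule sum.nat_diff_reindex)
    then show ?thesis by (simp add: lessThan_Suc_atMost)
  qed
  also have "\<dots> = fmul (fstar cj g) (fstar cj f) w"
    unfolding fmul_def fstar_def
    by (rule sum.cong) (auto simp: wstar_take wstar_drop mult.commute)
  finally show "fstar cj (fmul f g) w = fmul (fstar cj g) (fstar cj f) w" .
qed


definition eqv :: "('v,'e) pre_digraph \<Rightarrow> ('v,'e,'k::field) fa \<Rightarrow> ('v,'e,'k) fa \<Rightarrow> bool" where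
  "eqv G f g \<longleftrightarrow> fsub f g \<in> lpa_ideal G"

lemma ideal_fsub: "x \<in> lpa_ideal G \<Longrightarrow> y \<in> lpa_ideal G \<Longrightarrow> fsub x y \<in> lpa_ideal G"
  by (simp add: fsub_eq lpa_ideal.add lpa_ideal.smult)

lemma ideal_lc: "finite A \<Longrightarrow> (\<And>i. i \<in> A \<Longrightarrow> h i \<in> lpa_ideal G) \<Longrightarrow> lc A c h \<in> lpa_ideal G"
proof (induction A rule: finite_induct)
  case empty then show ?case by (simp add: lpa_ideal.zero)
next
  case (insert a A) then show ?case by (simp add: lc_insert lpa_ideal.add lpa_ideal.smult)
qed

lemma eqv_refl[simp]: "eqv G f f"
proof -
  have "fsub f f = fzero" by (simp add: fsub_def fzero_def)
  then show ?thesis by (simp add: eqv_def lpa_ideal.zero)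
qed

lemma eqv_sym: "eqv G f g \<Longrightarrow> eqv G g f"
proof -
  have "fsub g f = fsmult (-1) (fsub f g)" by (simp add: fsub_def fsmult_def fun_eq_iff)
  then show "eqv G f g \<Longrightarrow> eqv G g f" by (simp add: eqv_def lpa_ideal.smult)
qed

lemma eqv_trans: "eqv G f g \<Longrightarrow> eqv G g h \<Longrightarrow> eqv G f h"
proof -
  have "fsub f h = fadd (fsub f g) (fsub g h)" by (simp add: fsub_def fadd_def fun_eq_iff)
  then show "eqv G f g \<Longrightarrow> eqv G g h \<Longrightarrow> eqv G f h" by (simp add: eqv_def lpa_ideal.add)
qed

lemma eqv_fadd: "eqv G f f' \<Longrightarrow> eqv G g g' \<Longrightarrow> eqv G (fadd f g) (fadd f' g')"
proof -
  have "fsub (fadd f g) (fadd f' g') = fadd (fsub f f') (fsub g g')" by (simp add: fsub_def fadd_def fun_eq_iff)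
  then show "eqv G f f' \<Longrightarrow> eqv G g g' \<Longrightarrow> ?thesis" by (simp add: eqv_def lpa_ideal.add)
qed

lemma eqv_fsub: "eqv G f f' \<Longrightarrow> eqv G g g' \<Longrightarrow> eqv G (fsub f g) (fsub f' g')"
proof -
  have "fsub (fsub f g) (fsub f' g') = fsub (fsub f f') (fsub g g')" by (simp add: fsub_def fun_eq_iff)
  then show "eqv G f f' \<Longrightarrow> eqv G g g' \<Longrightarrow> ?thesis" by (simp add: eqv_def ideal_fsub)
qed

lemma eqv_fsmult: "eqv G f f' \<Longrightarrow> eqv G (fsmult a f) (fsmult a f')"
proof -
  have "fsub (fsmult a f) (fsmult a f') = fsmult a (fsub f f')" by (simp add: fsub_def fsmult_def fun_eq_iff algebra_simps)
  then show "eqv G f f' \<Longrightarrow> ?thesis" by (simp add: eqv_def lpa_ideal.smult)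
qed

lemma eqv_fmul: "f' \<in> FA G \<Longrightarrow> g \<in> FA G \<Longrightarrow> eqv G f f' \<Longrightarrow> eqv G g g' \<Longrightarrow> eqv G (fmul f g) (fmul f' g')"
proof -
  have "fsub (fmul f g) (fmul f' g') = fadd (fmul (fsub f f') g) (fmul f' (fsub g g'))"
    by (simp add: fmul_fsub) (simp add: fsub_def fadd_def fun_eq_iff)
  then show "f' \<in> FA G \<Longrightarrow> g \<in> FA G \<Longrightarrow> eqv G f f' \<Longrightarrow> eqv G g g' \<Longrightarrow> ?thesis"
    by (simp add: eqv_def lpa_ideal.add lpa_ideal.mult_left lpa_ideal.mult_right)
qed

lemma eqv_lc: "finite A \<Longrightarrow> (\<And>i. i \<in> A \<Longrightarrow> eqv G (f i) (g i)) \<Longrightarrow> eqv G (lc A c f) (lc A c g)"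
  unfolding eqv_def lc_fsub by (rule ideal_lc) auto

lemma rels_eqv: "fsub x y \<in> lpa_rels G \<Longrightarrow> eqv G x y"
  by (simp add: eqv_def lpa_ideal.gen)

lemma wstar_EG: "wstar w = [GE e, GG e] \<longleftrightarrow> w = [GE e, GG e]"
proof -
  have "wstar [GE e, GG e] = [GE e, GG e]" by (simp add: wstar_def)
  then show ?thesis by (metis wstar_wstar)
qed

lemma cj_if: "field_involution cj \<Longrightarrow> cj (if P then 1 else 0) = (if P then 1 else 0)"
  by (simp add: cj_props)

lemma fstar_ck2: fixes G :: "('v,'e) pre_digraph" and cj :: "'k::field \<Rightarrow> 'k" assumes cj: "field_involution cj"
 shows "fstar cj (\<lambda>w::('v,'e) gen list. \<Sum>e\<in>out_arcs G v. mono [GE e, GG e] w) = (\<lambda>w. \<Sum>e\<in>out_arcs G v. mono [GE e, GG e] w)"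
  by (simp add: fun_eq_iff fstar_def mono_def wstar_EG cj_if[OF cj] cj_sum[OF cj])

lemma fstar_rels: assumes cj: "field_involution cj" and "x \<in> lpa_rels G"
  shows "fstar cj x \<in> lpa_rels G"
  using assms(2)
proof cases
  case (relV v w)
  have "fstar cj x = fsub (mono [GV w, GV v]) (if w = v then mono [GV w] else fzero)"
    using relV cj by (auto simp: fstar_fsub fstar_mono wstar_def fstar_fzero)
  then show ?thesis using relV by (simp add: lpa_rels.relV)
next
  case (relE1a e)
  have "fstar cj x = fsub (mono [GG e, GV (tail G e)]) (mono [GG e])"
    using relE1a cj by (auto simp: fstar_fsub fstar_mono wstar_def)
  then show ?thesis using relE1a by (simp add: lpa_rels.relE2b)
next
  case (relE1b e)
  have "fstar cj x = fsub (mono [GV (head G e), GG e]) (mono [GG e])"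
    using relE1b cj by (auto simp: fstar_fsub fstar_mono wstar_def)
  then show ?thesis using relE1b by (simp add: lpa_rels.relE2a)
next
  case (relE2a e)
  have "fstar cj x = fsub (mono [GE e, GV (head G e)]) (mono [GE e])"
    using relE2a cj by (auto simp: fstar_fsub fstar_mono wstar_def)
  then show ?thesis using relE2a by (simp add: lpa_rels.relE1b)
next
  case (relE2b e)
  have "fstar cj x = fsub (mono [GV (tail G e), GE e]) (mono [GE e])"
    using relE2b cj by (auto simp: fstar_fsub fstar_mono wstar_def)
  then show ?thesis using relE2b by (simp add: lpa_rels.relE1a)
next
  case (relCK1 e f)
  have "fstar cj x = fsub (mono [GG f, GE e]) (if f = e then mono [GV (head G f)] else fzero)"
    using relCK1 cj by (auto simp: fstar_fsub fstar_mono wstar_def fstar_fzero)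
  then show ?thesis using relCK1 by (simp add: lpa_rels.relCK1)
next
  case (relCK2 v)
  note fstar_ck2[OF cj, of G v]
  then have "fstar cj x = fsub (mono [GV v]) (\<lambda>w. \<Sum>e\<in>out_arcs G v. mono [GE e, GG e] w)"
    using relCK2 cj by (simp add: fstar_fsub fstar_mono wstar_def)
  then show ?thesis using relCK2 by (simp add: lpa_rels.relCK2)
qed

lemma fstar_ideal: assumes cj: "field_involution cj" shows "x \<in> lpa_ideal G \<Longrightarrow> fstar cj x \<in> lpa_ideal G"
proof (induction rule: lpa_ideal.induct)
  case (gen x) then show ?case by (simp add: fstar_rels cj lpa_ideal.gen)
next
  case zero then show ?case by (simp add: fstar_fzero cj lpa_ideal.zero)
next
  case (add x y) then show ?case by (simp add: fstar_fadd cj lpa_ideal.add)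
next
  case (smult x a) then show ?case by (simp add: fstar_fsmult cj lpa_ideal.smult)
next
  case (mult_left x y) then show ?case by (simp add: fstar_fmul cj lpa_ideal.mult_right fstar_FA)
next
  case (mult_right x y) then show ?case by (simp add: fstar_fmul cj lpa_ideal.mult_left fstar_FA)
qed

lemma eqv_fstar: "field_involution cj \<Longrightarrow> eqv G f g \<Longrightarrow> eqv G (fstar cj f) (fstar cj g)"
  by (simp add: eqv_def fstar_fsub[symmetric] fstar_ideal)

lemma lcls_mem: "f \<in> FA G \<Longrightarrow> f \<in> lcls G f"
  by (simp add: lcls_def eqv_def[symmetric])

lemma lcls_eq: assumes "eqv G f g" shows "lcls G f = lcls G g"
proof -
  have "eqv G f y \<longleftrightarrow> eqv G g y" for y
    using assms eqv_trans[of G f g y] eqv_trans[of G g f y] eqv_sym[of G f g] by blast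
  then show ?thesis unfolding lcls_def eqv_def[symmetric] by simp
qed

lemma lrep_lcls: assumes "f \<in> FA G" shows "lrep (lcls G f) \<in> FA G" "eqv G f (lrep (lcls G f))"
proof -
  have "lrep (lcls G f) \<in> lcls G f" unfolding lrep_def by (rule someI[of _ f]) (rule lcls_mem[OF assms])
  then show "lrep (lcls G f) \<in> FA G" "eqv G f (lrep (lcls G f))" by (auto simp: lcls_def eqv_def)
qed

lemma lcls_LPA: "f \<in> FA G \<Longrightarrow> lcls G f \<in> LPA G" by (simp add: LPA_def)

lemma LPA_E: assumes "X \<in> LPA G" obtains f where "f \<in> FA G" "X = lcls G f"
  using assms by (auto simp: LPA_def)

lemma lrep_FA: "X \<in> LPA G \<Longrightarrow> lrep X \<in> FA G"
  by (metis LPA_E lrep_lcls(1))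

lemma lcls_lrep: "X \<in> LPA G \<Longrightarrow> lcls G (lrep X) = X"
  by (metis LPA_E lrep_lcls lcls_eq)

lemma ladd_lcls: "f \<in> FA G \<Longrightarrow> g \<in> FA G \<Longrightarrow> ladd G (lcls G f) (lcls G g) = lcls G (fadd f g)"
  unfolding ladd_def
  by (metis eqv_fadd eqv_sym fadd_FA lcls_eq lrep_lcls)

lemma lsub_lcls: "f \<in> FA G \<Longrightarrow> g \<in> FA G \<Longrightarrow> lsub G (lcls G f) (lcls G g) = lcls G (fsub f g)"
  unfolding lsub_def
  by (metis eqv_fsub eqv_sym fsub_FA lcls_eq lrep_lcls)

lemma lmul_lcls: "f \<in> FA G \<Longrightarrow> g \<in> FA G \<Longrightarrow> lmul G (lcls G f) (lcls G g) = lcls G (fmul f g)"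
  unfolding lmul_def
  by (metis eqv_fmul eqv_sym fmul_FA lcls_eq lrep_lcls)

lemma lsmult_lcls: "f \<in> FA G \<Longrightarrow> lsmult G a (lcls G f) = lcls G (fsmult a f)"
  unfolding lsmult_def
  by (metis eqv_fsmult eqv_sym fsmult_FA lcls_eq lrep_lcls)

lemma lstar_lcls: "field_involution cj \<Longrightarrow> f \<in> FA G \<Longrightarrow> lstar G cj (lcls G f) = lcls G (fstar cj f)"
  unfolding lstar_def
  by (metis eqv_fstar eqv_sym fstar_FA lcls_eq lrep_lcls)

lemma sm_props: assumes "involutive_algebra cj sm st"
  shows "\<And>x. sm 0 x = 0" "\<And>a. sm a 0 = 0" "\<And>x. sm (-1) x = - x" "\<And>a b x. sm (a + b) x = sm a x + sm b x"
   "\<And>a x y. sm a (x + y) = sm a x + sm a y" "\<And>a b x. sm (a * b) x = sm a (sm b x)" "\<And>x. sm 1 x = x"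
   "\<And>a x y. sm a (x - y) = sm a x - sm a y" "\<And>a b x. sm (a - b) x = sm a x - sm b x"
   "\<And>a x. sm a (- x) = - sm a x" "\<And>a x. sm (- a) x = - sm a x"
proof -
  have A: "\<And>a x y. sm a (x + y) = sm a x + sm a y" "\<And>a b x. sm (a + b) x = sm a x + sm b x"
    "\<And>a b x. sm (a * b) x = sm a (sm b x)" "\<And>x. sm 1 x = x" using assms by (auto simp: involutive_algebra_def)
  show z: "\<And>x. sm 0 x = 0" using A(2)[of 0 0] by simp
  show z2: "\<And>a. sm a 0 = 0" using A(1)[of _ 0 0] by simp
  show n: "\<And>a x. sm a (- x) = - sm a x" using A(1) z2 by (metis add.right_inverse add_eq_0_iff)
  show n2: "\<And>a x. sm (- a) x = - sm a x" using A(2) z by (metis add.right_inverse add_eq_0_iff)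
  show "\<And>x. sm (-1) x = - x" using n2 A(4) by metis
  show "\<And>a b x. sm (a + b) x = sm a x + sm b x" "\<And>a x y. sm a (x + y) = sm a x + sm a y"
    "\<And>a b x. sm (a * b) x = sm a (sm b x)" "\<And>x. sm 1 x = x" by (fact A)+
  show "\<And>a x y. sm a (x - y) = sm a x - sm a y" using A(1) n by (metis diff_conv_add_uminus)
  show "\<And>a b x. sm (a - b) x = sm a x - sm b x" using A(2) n2 by (metis diff_conv_add_uminus)
qed

lemma sm_sum_left: "involutive_algebra cj sm st \<Longrightarrow> sm (sum f A) x = (\<Sum>i\<in>A. sm (f i) x)"
  by (induction A rule: infinite_finite_induct) (auto simp: sm_props)
lemma sm_sum_right: "involutive_algebra cj sm st \<Longrightarrow> sm a (sum f A) = (\<Sum>i\<in>A. sm a (f i))"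
  by (induction A rule: infinite_finite_induct) (auto simp: sm_props)

definition tau :: "('v,'e) pre_digraph \<Rightarrow> (('v,'e,'k::field) lpa \<Rightarrow> 'r::ring) \<Rightarrow> ('v,'e,'k) fa \<Rightarrow> 'r" where
  "tau G t f = t (lcls G f)"

locale tctx =
  fixes G :: "('v,'e) pre_digraph" and cj :: "'k::field \<Rightarrow> 'k" and sm :: "'k \<Rightarrow> 'r::ring \<Rightarrow> 'r"
    and st :: "'r \<Rightarrow> 'r" and t :: "('v,'e,'k) lpa \<Rightarrow> 'r"
  assumes wf: "wf_digraph G" and cj: "field_involution cj" and ia: "involutive_algebra cj sm st"
    and tr: "lpa_trace G t" and kl: "lpa_trace_K_linear G sm t"
begin

lemma tau_fadd: "f \<in> FA G \<Longrightarrow> g \<in> FA G \<Longrightarrow> tau G t (fadd f g) = tau G t f + tau G t g"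
  using tr unfolding tau_def lpa_trace_def by (metis ladd_lcls lcls_LPA)

lemma tau_fsmult: "f \<in> FA G \<Longrightarrow> tau G t (fsmult a f) = sm a (tau G t f)"
  using kl unfolding tau_def lpa_trace_K_linear_def by (metis lsmult_lcls lcls_LPA)

lemma tau_fzero: "tau G t fzero = 0"
proof -
  have "tau G t (fadd fzero fzero) = tau G t fzero + tau G t fzero" by (simp add: tau_fadd)
  moreover have "fadd fzero fzero = (fzero :: ('v,'e,'k) fa)" by (simp add: fadd_def fzero_def)
  ultimately show ?thesis by simp
qed

lemma tau_fsub: "f \<in> FA G \<Longrightarrow> g \<in> FA G \<Longrightarrow> tau G t (fsub f g) = tau G t f - tau G t g"
  by (simp add: fsub_eq tau_fadd tau_fsmult fsmult_FA sm_props[OF ia])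

lemma tau_eqv: "f \<in> FA G \<Longrightarrow> g \<in> FA G \<Longrightarrow> eqv G f g \<Longrightarrow> tau G t f = tau G t g"
  by (simp add: tau_def lcls_eq)

lemma tau_comm: "f \<in> FA G \<Longrightarrow> g \<in> FA G \<Longrightarrow> tau G t (fmul f g) = tau G t (fmul g f)"
  using tr unfolding tau_def lpa_trace_def by (metis lmul_lcls lcls_LPA)

lemma tau_lc: "finite A \<Longrightarrow> (\<And>i. i \<in> A \<Longrightarrow> f i \<in> FA G) \<Longrightarrow> tau G t (lc A c f) = (\<Sum>i\<in>A. sm (c i) (tau G t (f i)))"
proof (induction A rule: finite_induct)
  case empty then show ?case by (simp add: tau_fzero)
next
  case (insert a A) then show ?case by (simp add: lc_insert tau_fadd tau_fsmult fsmult_FA lc_FA)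
qed

end


lemma is_path_Nil: "is_path G (u, []) \<longleftrightarrow> u \<in> verts G"
  by (simp add: is_path_def)

lemma path_range_Nil[simp]: "path_range G (u, []) = u" by (simp add: path_range_def)
lemma path_range_Cons: "path_range G (u, e # es) = path_range G (head G e, es)"
  by (simp add: path_range_def)

lemma is_path_Cons: assumes "wf_digraph G"
  shows "is_path G (u, e # es) \<longleftrightarrow> u \<in> verts G \<and> e \<in> arcs G \<and> tail G e = u \<and> is_path G (head G e, es)"
proof -
  have idx: "(\<forall>i. Suc i < length (e # es) \<longrightarrow> head G ((e # es) ! i) = tail G ((e # es) ! Suc i))
     \<longleftrightarrow> (es \<noteq> [] \<longrightarrow> tail G (hd es) = head G e) \<and> (\<forall>i. Suc i < length es \<longrightarrow> head G (es ! i) = tail G (es ! Suc i))"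
    (is "?L \<longleftrightarrow> ?R")
  proof
    assume L: ?L
    show ?R
    proof (intro conjI impI allI)
      assume "es \<noteq> []" then show "tail G (hd es) = head G e" using L[rule_format, of 0] by (cases es) auto
    next
      fix i assume "Suc i < length es" then show "head G (es ! i) = tail G (es ! Suc i)"
        using L[rule_format, of "Suc i"] by auto
    qed
  next
    assume R: ?R
    show ?L
    proof (intro allI impI)
      fix i assume "Suc i < length (e # es)"
      then show "head G ((e # es) ! i) = tail G ((e # es) ! Suc i)"
        using R by (cases i) (auto simp: hd_conv_nth)
    qed
  qed
  show ?thesis unfolding is_path_def using idx assms
    by (auto simp: wf_digraph.head_in_verts)
qed

lemma is_path_append: assumes "wf_digraph G"
  shows "is_path G (u, es @ cs) \<longleftrightarrow> is_path G (u, es) \<and> is_path G (path_range G (u, es), cs)"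
proof (induction es arbitrary: u)
  case Nil then show ?case by (auto simp: is_path_def)
next
  case (Cons e es) then show ?case by (auto simp: is_path_Cons[OF assms] path_range_Cons)
qed

lemma path_range_append: "path_range G (u, es @ cs) = path_range G (path_range G (u, es), cs)"
  by (induction es arbitrary: u) (auto simp: path_range_Cons)

lemma is_path_verts: "is_path G p \<Longrightarrow> fst p \<in> verts G" by (auto simp: is_path_def)
lemma is_path_arcs: "is_path G (u, es) \<Longrightarrow> set es \<subseteq> arcs G" by (auto simp: is_path_def)

lemma path_range_verts: assumes "wf_digraph G" "is_path G (u, es)" shows "path_range G (u, es) \<in> verts G"
  using assms(2)
proof (induction es arbitrary: u)
  case Nil then show ?case by (simp add: is_path_def)
next
  case (Cons e es) then show ?case by (simp add: is_path_Cons[OF assms(1)] path_range_Cons)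
qed

definition pw :: "'v \<times> 'e list \<Rightarrow> ('v,'e) gen list" where
  "pw p = GV (fst p) # map GE (snd p)"

definition cw :: "('v \<times> 'e list) \<times> ('v \<times> 'e list) \<Rightarrow> ('v,'e) gen list" where
  "cw x = pw (fst x) @ wstar (pw (snd x))"

definition vpair :: "('v,'e) pre_digraph \<Rightarrow> ('v \<times> 'e list) \<times> ('v \<times> 'e list) \<Rightarrow> bool" where
  "vpair G x \<longleftrightarrow> is_path G (fst x) \<and> is_path G (snd x) \<and> path_range G (fst x) = path_range G (snd x)"

lemma wstar_pw: "wstar (pw (u, fs)) = map GG (rev fs) @ [GV u]"
  by (simp add: pw_def wstar_Cons)

lemma vw_pw: "is_path G p \<Longrightarrow> vw G (pw p)"
  by (cases p) (auto simp: pw_def is_path_def)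

lemma vw_cw: "vpair G x \<Longrightarrow> vw G (cw x)"
  by (auto simp: cw_def vpair_def vw_pw)

lemma cw_ne: "cw x \<noteq> []" by (simp add: cw_def pw_def)

definition weq :: "('v,'e) pre_digraph \<Rightarrow> ('k::field \<Rightarrow> 'k) \<Rightarrow> ('v,'e) gen list \<Rightarrow> ('v,'e) gen list \<Rightarrow> bool" where
  "weq G cj u v \<longleftrightarrow> eqv G (mono u :: ('v,'e,'k) fa) (mono v)"
definition wz :: "('v,'e) pre_digraph \<Rightarrow> ('k::field \<Rightarrow> 'k) \<Rightarrow> ('v,'e) gen list \<Rightarrow> bool" where
  "wz G cj u \<longleftrightarrow> eqv G (mono u :: ('v,'e,'k) fa) fzero"

context tctx begin

abbreviation "weqv \<equiv> weq G cj"
abbreviation "wzr \<equiv> wz G cj"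

lemma hv: "e \<in> arcs G \<Longrightarrow> head G e \<in> verts G" "e \<in> arcs G \<Longrightarrow> tail G e \<in> verts G"
  using wf by (auto simp: wf_digraph.head_in_verts wf_digraph.tail_in_verts)

lemma weq_sym: "weqv u v \<Longrightarrow> weqv v u" unfolding weq_def by (rule eqv_sym)
lemma weq_trans: "weqv u v \<Longrightarrow> weqv v w \<Longrightarrow> weqv u w" unfolding weq_def by (rule eqv_trans)
lemma wz_weq: "weqv u v \<Longrightarrow> wzr v \<Longrightarrow> wzr u" unfolding weq_def wz_def by (rule eqv_trans)
lemma weq_refl[simp]: "weqv u u" by (simp add: weq_def)

lemma fmul_mono_FA: "f \<in> FA G \<Longrightarrow> vw G b \<Longrightarrow> fmul f (mono b) \<in> FA G"
  by (cases "b = []") (auto simp: fmul_mono_Nil fmul_FA mono_FA)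

lemma eqv_ctx: assumes "vw G a" "vw G b" "f \<in> FA G" "g \<in> FA G" "eqv G f g"
  shows "eqv G (fmul (mono a) (fmul f (mono b))) (fmul (mono a) (fmul g (mono b)))"
proof -
  have 1: "eqv G (fmul f (mono b)) (fmul g (mono b))"
  proof (cases "b = []")
    case True then show ?thesis using assms by (simp add: fmul_mono_Nil)
  next
    case False then show ?thesis using assms by (intro eqv_fmul) (auto simp: mono_FA)
  qed
  show ?thesis
  proof (cases "a = []")
    case True then show ?thesis using 1 by (simp add: fmul_mono_Nil)
  next
    case False then show ?thesis using assms 1 fmul_mono_FA[OF assms(3,2)] by (rule_tac eqv_fmul) (auto simp: mono_FA)
  qed
qed

lemma weq_ctxI: assumes "weqv m m'" "m \<noteq> []" "m' \<noteq> []" "vw G m" "vw G m'" "vw G a" "vw G b"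
  "u = a @ m @ b" "v = a @ m' @ b" shows "weqv u v"
  using eqv_ctx[OF assms(6,7) mono_FA[OF assms(2,4)] mono_FA[OF assms(3,5)] assms(1)[unfolded weq_def]] assms(8,9)
  by (simp add: fmul_mono weq_def)

lemma wz_ctxI: assumes "wzr m" "m \<noteq> []" "vw G m" "vw G a" "vw G b" "u = a @ m @ b" shows "wzr u"
  using eqv_ctx[OF assms(4,5) mono_FA[OF assms(2,3)] fzero_FA assms(1)[unfolded wz_def]] assms(6)
  by (simp add: fmul_mono wz_def)

lemma r_VV: "v \<in> verts G \<Longrightarrow> weqv [GV v, GV v] [GV v]"
  using rels_eqv[OF lpa_rels.relV[of v G v]] by (simp add: weq_def wz_def)
lemma r_VVz: "v \<in> verts G \<Longrightarrow> w \<in> verts G \<Longrightarrow> v \<noteq> w \<Longrightarrow> wzr [GV v, GV w]"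
  using rels_eqv[OF lpa_rels.relV[of v G w]] by (simp add: weq_def wz_def)
lemma r_VE: "e \<in> arcs G \<Longrightarrow> weqv [GV (tail G e), GE e] [GE e]"
  using rels_eqv[OF lpa_rels.relE1a[of e G]] by (simp add: weq_def wz_def)
lemma r_EV: "e \<in> arcs G \<Longrightarrow> weqv [GE e, GV (head G e)] [GE e]"
  using rels_eqv[OF lpa_rels.relE1b[of e G]] by (simp add: weq_def wz_def)
lemma r_VG: "e \<in> arcs G \<Longrightarrow> weqv [GV (head G e), GG e] [GG e]"
  using rels_eqv[OF lpa_rels.relE2a[of e G]] by (simp add: weq_def wz_def)
lemma r_GV: "e \<in> arcs G \<Longrightarrow> weqv [GG e, GV (tail G e)] [GG e]"
  using rels_eqv[OF lpa_rels.relE2b[of e G]] by (simp add: weq_def wz_def)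
lemma r_GE: "e \<in> arcs G \<Longrightarrow> weqv [GG e, GE e] [GV (head G e)]"
  using rels_eqv[OF lpa_rels.relCK1[of e G e]] by (simp add: weq_def wz_def)
lemma r_GEz: "e \<in> arcs G \<Longrightarrow> f \<in> arcs G \<Longrightarrow> e \<noteq> f \<Longrightarrow> wzr [GG e, GE f]"
  using rels_eqv[OF lpa_rels.relCK1[of e G f]] by (simp add: weq_def wz_def)

lemma r_VEz: assumes "v \<in> verts G" "e \<in> arcs G" "v \<noteq> tail G e" shows "wzr [GV v, GE e]"
proof -
  have "weqv [GV v, GE e] [GV v, GV (tail G e), GE e]"
    by (rule weq_ctxI[OF weq_sym[OF r_VE], of e "[GV v]" "[]"]) (auto simp: assms hv)
  moreover have "wzr [GV v, GV (tail G e), GE e]"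
    by (rule wz_ctxI[OF r_VVz[of v "tail G e"], of "[]" "[GE e]"]) (auto simp: assms hv)
  ultimately show ?thesis by (rule wz_weq)
qed

lemma r_EVz: assumes "v \<in> verts G" "e \<in> arcs G" "v \<noteq> head G e" shows "wzr [GE e, GV v]"
proof -
  have "weqv [GE e, GV v] [GE e, GV (head G e), GV v]"
    by (rule weq_ctxI[OF weq_sym[OF r_EV], of e "[]" "[GV v]"]) (auto simp: assms hv)
  moreover have "wzr [GE e, GV (head G e), GV v]"
    by (rule wz_ctxI[OF r_VVz[of "head G e" v], of "[GE e]" "[]"]) (auto simp: assms hv)
  ultimately show ?thesis by (rule wz_weq)
qed

lemma r_GVz: assumes "v \<in> verts G" "e \<in> arcs G" "v \<noteq> tail G e" shows "wzr [GG e, GV v]"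
proof -
  have "weqv [GG e, GV v] [GG e, GV (tail G e), GV v]"
    by (rule weq_ctxI[OF weq_sym[OF r_GV], of e "[]" "[GV v]"]) (auto simp: assms hv)
  moreover have "wzr [GG e, GV (tail G e), GV v]"
    by (rule wz_ctxI[OF r_VVz[of "tail G e" v], of "[GG e]" "[]"]) (auto simp: assms hv)
  ultimately show ?thesis by (rule wz_weq)
qed

lemma cw_pair: "cw ((u, es), (u', fs)) = GV u # map GE es @ map GG (rev fs) @ [GV u']"
  by (simp add: cw_def pw_def wstar_Cons)

lemma nf_step: assumes "valid_gen G g" "vpair G x"
  shows "wzr (g # cw x) \<or> (\<exists>y. vpair G y \<and> weqv (g # cw x) (cw y))"
proof -
  obtain u es u' fs where x: "x = ((u,es),(u',fs))" by (metis prod.exhaust)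
  have p: "is_path G (u,es)" "is_path G (u',fs)" "path_range G (u,es) = path_range G (u',fs)"
    using assms(2) x by (auto simp: vpair_def)
  have u: "u \<in> verts G" and u': "u' \<in> verts G" using p is_path_verts by force+
  have es: "set es \<subseteq> arcs G" and fs: "set fs \<subseteq> arcs G" using p is_path_arcs by metis+
  define rest where "rest = map GE es @ map GG (rev fs) @ [GV u']"
  have vr: "vw G rest" using es fs u' by (insert es fs u u', auto simp: rest_def)
  have cx: "cw x = GV u # rest" by (simp add: x cw_pair rest_def)
  show ?thesis
  proof (cases g)
    case (GV a)
    then have a: "a \<in> verts G" using assms by simp
    show ?thesis
    proof (cases "a = u")
      case True
      have "weqv (g # cw x) (cw x)" by (rule weq_ctxI[OF r_VV[OF u], of "[]" rest]) (insert es fs u u', auto simp: GV True cx vr u)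
      then show ?thesis using assms by blast
    next
      case False
      have "wzr (g # cw x)" by (rule wz_ctxI[OF r_VVz[OF a u False], of "[]" rest]) (insert es fs u u', auto simp: GV cx vr u a)
      then show ?thesis ..
    qed
  next
    case (GE a)
    then have a: "a \<in> arcs G" using assms by simp
    show ?thesis
    proof (cases "head G a = u")
      case True
      let ?y = "((tail G a, a # es), (u', fs))"
      have "weqv (g # cw x) (GE a # rest)"
        by (rule weq_ctxI[OF r_EV[OF a], of "[]" rest]) (insert es fs u u', auto simp: GE True cx vr a hv u)
      moreover have "weqv (GE a # rest) (cw ?y)"
        by (rule weq_ctxI[OF weq_sym[OF r_VE[OF a]], of "[]" rest]) (insert es fs u u', auto simp: cw_pair rest_def vr a hv)
      moreover have "vpair G ?y" using p True a
        by (insert es fs u u', auto simp: vpair_def is_path_Cons[OF wf] path_range_Cons hv)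
      ultimately show ?thesis by (metis weq_trans)
    next
      case False
      have "wzr (g # cw x)"
        by (rule wz_ctxI[OF r_EVz[OF u a], of "[]" rest]) (use False in \<open>auto simp: GE cx vr u a\<close>)
      then show ?thesis ..
    qed
  next
    case (GG a)
    then have a: "a \<in> arcs G" using assms by simp
    show ?thesis
    proof (cases es)
      case Nil
      define rest' where "rest' = map GG (rev fs) @ [GV u']"
      have cx': "cw x = GV u # rest'" using cx Nil rest_def rest'_def by simp
      have vr': "vw G rest'" using fs u' by (insert es fs u u', auto simp: rest'_def)
      show ?thesis
      proof (cases "tail G a = u")
        case True
        let ?y = "((head G a, []), (u', fs @ [a]))"
        have "weqv (g # cw x) (GG a # rest')"
          by (rule weq_ctxI[OF r_GV[OF a], of "[]" rest']) (insert es fs u u', auto simp: GG True cx' vr' a hv)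
        moreover have "weqv (GG a # rest') (cw ?y)"
          by (rule weq_ctxI[OF weq_sym[OF r_VG[OF a]], of "[]" rest']) (insert es fs u u', auto simp: cw_pair rest'_def vr' a hv)
        moreover have "vpair G ?y"
        proof -
          have r: "path_range G (u', fs) = u" using p(3) Nil by simp
          have "is_path G (u, [a])" using True a u by (simp add: is_path_Cons[OF wf] is_path_Nil hv)
          then show ?thesis using p(2) r a
            by (simp add: vpair_def is_path_append[OF wf] path_range_append is_path_Nil hv path_range_Cons)
        qed
        ultimately show ?thesis by (metis weq_trans)
      next
        case False
        have "wzr (g # cw x)"
          by (rule wz_ctxI[OF r_GVz[OF u a], of "[]" rest']) (use False in \<open>auto simp: GG cx' vr' u a\<close>)
        then show ?thesis ..
      qed
    next
      case (Cons e es')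
      have e: "e \<in> arcs G" "tail G e = u" "is_path G (head G e, es')"
        using p(1) Cons by (insert es fs u u', auto simp: is_path_Cons[OF wf])
      define rest2 where "rest2 = map GE es' @ map GG (rev fs) @ [GV u']"
      have vr2: "vw G rest2" using fs u' es Cons by (insert es fs u u', auto simp: rest2_def)
      have s1: "weqv (g # cw x) ([GG a] @ [GE e] @ rest2)"
        by (rule weq_ctxI[OF r_VE[OF e(1)], of "[GG a]" rest2]) (insert es fs u u', auto simp: e GG cx Cons rest_def rest2_def vr2 a u)
      show ?thesis
      proof (cases "a = e")
        case True
        let ?y = "((head G e, es'), (u', fs))"
        have "weqv ([GG a] @ [GE e] @ rest2) (cw ?y)"
          by (rule weq_ctxI[OF r_GE[OF e(1)], of "[]" rest2]) (insert es fs u u' Cons, auto simp: True cw_pair rest2_def vr2 e hv)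
        moreover have "vpair G ?y" using e p Cons by (insert es fs u u', auto simp: vpair_def path_range_Cons)
        ultimately show ?thesis using s1 by (metis weq_trans)
      next
        case False
        have "wzr ([GG a] @ [GE e] @ rest2)"
          by (rule wz_ctxI[OF r_GEz[OF a e(1) False], of "[]" rest2]) (insert es fs u u', auto simp: vr2 a e)
        then show ?thesis using s1 wz_weq by blast
      qed
    qed
  qed
qed

lemma nf_base: assumes "valid_gen G g" shows "\<exists>y. vpair G y \<and> weqv [g] (cw y)"
proof (cases g)
  case (GV v)
  then have v: "v \<in> verts G" using assms by simp
  have "weqv [g] (cw ((v,[]),(v,[])))" using weq_sym[OF r_VV[OF v]] by (simp add: GV cw_pair)
  moreover have "vpair G ((v,[]),(v,[]))" using v by (simp add: vpair_def is_path_Nil)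
  ultimately show ?thesis by blast
next
  case (GE e)
  then have e: "e \<in> arcs G" using assms by simp
  have "weqv [g] [GV (tail G e), GE e]" using weq_sym[OF r_VE[OF e]] by (simp add: GE)
  moreover have "weqv [GV (tail G e), GE e] (cw ((tail G e,[e]),(head G e,[])))"
    by (rule weq_ctxI[OF weq_sym[OF r_EV[OF e]], of "[GV (tail G e)]" "[]"]) (auto simp: cw_pair e hv)
  moreover have "vpair G ((tail G e,[e]),(head G e,[]))" using e
    by (simp add: vpair_def is_path_Nil is_path_Cons[OF wf] hv path_range_Cons)
  ultimately show ?thesis by (metis weq_trans)
next
  case (GG e)
  then have e: "e \<in> arcs G" using assms by simp
  have "weqv [g] [GV (head G e), GG e]" using weq_sym[OF r_VG[OF e]] by (simp add: GG)
  moreover have "weqv [GV (head G e), GG e] (cw ((head G e,[]),(tail G e,[e])))"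
    by (rule weq_ctxI[OF weq_sym[OF r_GV[OF e]], of "[GV (head G e)]" "[]"]) (auto simp: cw_pair e hv)
  moreover have "vpair G ((head G e,[]),(tail G e,[e]))" using e
    by (simp add: vpair_def is_path_Nil is_path_Cons[OF wf] hv path_range_Cons)
  ultimately show ?thesis by (metis weq_trans)
qed

lemma nf: "w \<noteq> [] \<Longrightarrow> vw G w \<Longrightarrow> wzr w \<or> (\<exists>x. vpair G x \<and> weqv w (cw x))"
proof (induction w)
  case Nil then show ?case by simp
next
  case (Cons g w)
  show ?case
  proof (cases "w = []")
    case True then show ?thesis using nf_base Cons by auto
  next
    case False
    then have IH: "wzr w \<or> (\<exists>x. vpair G x \<and> weqv w (cw x))" using Cons by auto
    then show ?thesis
    proof
      assume "wzr w"
      then have "wzr (g # w)" by (rule wz_ctxI[of w "[g]" "[]"]) (use False Cons in auto)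
      then show ?thesis ..
    next
      assume "\<exists>x. vpair G x \<and> weqv w (cw x)"
      then obtain x where x: "vpair G x" "weqv w (cw x)" by blast
      have 1: "weqv (g # w) (g # cw x)"
        by (rule weq_ctxI[OF x(2), of "[g]" "[]"]) (use False Cons x in \<open>auto simp: cw_ne vw_cw\<close>)
      from nf_step[of g x] Cons x show ?thesis
        by (metis 1 weq_trans wz_weq vw_simps(2))
    qed
  qed
qed

end


definition M :: "'v \<Rightarrow> 'e list \<Rightarrow> 'e list \<Rightarrow> ('v,'e) gen list" where
  "M v fs fs' = map GG (rev fs) @ [GV v] @ map GE fs'"

context tctx begin

lemma L1: "is_path G (v,fs) \<Longrightarrow> is_path G (v,fs') \<Longrightarrow>
 (\<forall>cs. fs' = fs @ cs \<longrightarrow> weqv (M v fs fs') (pw (path_range G (v,fs), cs))) \<and>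
 (\<forall>cs. fs = fs' @ cs \<longrightarrow> weqv (M v fs fs') (wstar (pw (path_range G (v,fs'), cs)))) \<and>
 ((\<forall>cs. fs' \<noteq> fs @ cs) \<and> (\<forall>cs. fs \<noteq> fs' @ cs) \<longrightarrow> wzr (M v fs fs'))"
proof (induction fs arbitrary: v fs')
  case Nil
  have m: "M v [] fs' = pw (v, fs')" by (simp add: M_def pw_def)
  show ?case
  proof (intro conjI allI impI)
    fix cs assume "fs' = [] @ cs" then show "weqv (M v [] fs') (pw (path_range G (v, []), cs))" using m by simp
  next
    fix cs assume "[] = fs' @ cs" then have "fs' = []" "cs = []" by auto
    then show "weqv (M v [] fs') (wstar (pw (path_range G (v, fs'), cs)))" by (simp add: M_def pw_def)
  next
    assume "(\<forall>cs. fs' \<noteq> [] @ cs) \<and> (\<forall>cs. [] \<noteq> fs' @ cs)" then show "wzr (M v [] fs')" by simp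
  qed
next
  case (Cons f fs0)
  have f: "f \<in> arcs G" "tail G f = v" "is_path G (head G f, fs0)" and v: "v \<in> verts G"
    using Cons.prems(1) by (auto simp: is_path_Cons[OF wf])
  have fs0: "set fs0 \<subseteq> arcs G" using f(3) is_path_arcs by metis
  show ?case
  proof (cases fs')
    case Nil
    have "M v (f # fs0) fs' = wstar (pw (v, f # fs0))" by (simp add: M_def pw_def Nil wstar_Cons)
    then show ?thesis using Nil by auto
  next
    case (Cons f' fs0')
    have f': "f' \<in> arcs G" "tail G f' = v" "is_path G (head G f', fs0')"
      using Cons.prems(2) Cons by (auto simp: is_path_Cons[OF wf])
    have fs0': "set fs0' \<subseteq> arcs G" using f'(3) is_path_arcs by metis
    have s1: "weqv (M v (f # fs0) fs') (map GG (rev fs0) @ [GG f, GE f'] @ map GE fs0')"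
      by (rule weq_ctxI[OF r_VE[OF f'(1)], of "map GG (rev fs0) @ [GG f]" "map GE fs0'"])
        (insert f f' fs0 fs0' v, auto simp: M_def Cons)
    show ?thesis
    proof (cases "f = f'")
      case True
      have s2: "weqv (M v (f # fs0) fs') (M (head G f) fs0 fs0')"
      proof -
        have "weqv (map GG (rev fs0) @ [GG f, GE f'] @ map GE fs0') (M (head G f) fs0 fs0')"
          by (rule weq_ctxI[OF r_GE[OF f(1)], of "map GG (rev fs0)" "map GE fs0'"])
            (insert f f' fs0 fs0', auto simp: M_def True hv)
        then show ?thesis using s1 weq_trans by blast
      qed
      have IH: "(\<forall>cs. fs0' = fs0 @ cs \<longrightarrow> weqv (M (head G f) fs0 fs0') (pw (path_range G (head G f, fs0), cs))) \<and>
        (\<forall>cs. fs0 = fs0' @ cs \<longrightarrow> weqv (M (head G f) fs0 fs0') (wstar (pw (path_range G (head G f, fs0'), cs)))) \<and>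
        ((\<forall>cs. fs0' \<noteq> fs0 @ cs) \<and> (\<forall>cs. fs0 \<noteq> fs0' @ cs) \<longrightarrow> wzr (M (head G f) fs0 fs0'))"
        using Cons.IH[OF f(3)] f'(3) True by simp
      show ?thesis
      proof (intro conjI allI impI)
        fix cs assume "fs' = (f # fs0) @ cs"
        then have "fs0' = fs0 @ cs" using Cons True by simp
        then have "weqv (M (head G f) fs0 fs0') (pw (path_range G (head G f, fs0), cs))" using IH by blast
        then show "weqv (M v (f # fs0) fs') (pw (path_range G (v, f # fs0), cs))"
          using s2 weq_trans by (simp add: path_range_Cons)
      next
        fix cs assume "f # fs0 = fs' @ cs"
        then have "fs0 = fs0' @ cs" using Cons True by simp
        then have "weqv (M (head G f) fs0 fs0') (wstar (pw (path_range G (head G f, fs0'), cs)))" using IH by blast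
        then show "weqv (M v (f # fs0) fs') (wstar (pw (path_range G (v, fs'), cs)))"
          using s2 weq_trans True Cons by (simp add: path_range_Cons)
      next
        assume "(\<forall>cs. fs' \<noteq> (f # fs0) @ cs) \<and> (\<forall>cs. f # fs0 \<noteq> fs' @ cs)"
        then have "(\<forall>cs. fs0' \<noteq> fs0 @ cs) \<and> (\<forall>cs. fs0 \<noteq> fs0' @ cs)" using Cons True by simp
        then have "wzr (M (head G f) fs0 fs0')" using IH by blast
        then show "wzr (M v (f # fs0) fs')" using s2 wz_weq by blast
      qed
    next
      case False
      have "wzr (map GG (rev fs0) @ [GG f, GE f'] @ map GE fs0')"
        by (rule wz_ctxI[OF r_GEz[OF f(1) f'(1) False], of "map GG (rev fs0)" "map GE fs0'"])
          (insert f f' fs0 fs0', auto)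
      then have "wzr (M v (f # fs0) fs')" using s1 wz_weq by blast
      then show ?thesis using False Cons by auto
    qed
  qed
qed

lemma pw_append: assumes "is_path G (u, es @ cs)"
  shows "weqv (pw (u,es) @ pw (path_range G (u,es), cs)) (pw (u, es @ cs))"
proof -
  have p: "is_path G (u, es)" "is_path G (path_range G (u,es), cs)" using assms by (auto simp: is_path_append[OF wf])
  have u: "u \<in> verts G" and es: "set es \<subseteq> arcs G" and cs: "set cs \<subseteq> arcs G"
    using p is_path_verts is_path_arcs by force+
  show ?thesis
  proof (cases es rule: rev_exhaust)
    case Nil
    show ?thesis by (rule weq_ctxI[OF r_VV[OF u], of "[]" "map GE cs"]) (insert cs u, auto simp: Nil pw_def)
  next
    case (snoc es0 e)
    have e: "e \<in> arcs G" using es snoc by auto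
    have r: "path_range G (u, es) = head G e" by (simp add: path_range_def snoc)
    show ?thesis
      by (rule weq_ctxI[OF r_EV[OF e], of "GV u # map GE es0" "map GE cs"]) (insert cs u es e hv[OF e], auto simp: snoc path_range_def pw_def)
  qed
qed

lemma weq_star: "weqv a b \<Longrightarrow> weqv (wstar a) (wstar b)"
  unfolding weq_def using eqv_fstar[OF cj] by (metis fstar_mono[OF cj])
lemma wz_star: "wzr a \<Longrightarrow> wzr (wstar a)"
  unfolding wz_def using eqv_fstar[OF cj] by (metis fstar_mono[OF cj] fstar_fzero[OF cj])

lemma lpath_foldr: "set xs \<subseteq> arcs G \<Longrightarrow> w \<noteq> [] \<Longrightarrow> vw G w \<Longrightarrow>
  foldr (\<lambda>e acc. lmul G (lcls G (mono [GE e])) acc) xs (lcls G (mono w)) = lcls G (mono (map GE xs @ w) :: ('v,'e,'k) fa)"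
proof (induction xs)
  case Nil then show ?case by simp
next
  case (Cons x xs)
  then have "lmul G (lcls G (mono [GE x])) (lcls G (mono (map GE xs @ w)) :: ('v,'e,'k) lpa) = lcls G (mono ([GE x] @ map GE xs @ w))"
    by (subst lmul_lcls) (auto simp: mono_FA fmul_mono)
  then show ?case using Cons by simp
qed

lemma lpath_pw: assumes "is_path G p" shows "(lpath G p :: ('v,'e,'k) lpa) = lcls G (mono (pw p))"
proof -
  obtain v es where p: "p = (v, es)" by (metis prod.exhaust)
  show ?thesis
  proof (cases es)
    case Nil then show ?thesis by (simp add: p lpath_def lvert_def pw_def)
  next
    case (Cons e es')
    have e: "e \<in> arcs G" "tail G e = v" and es: "set es \<subseteq> arcs G" and v: "v \<in> verts G"
      using assms p Cons by (auto simp: is_path_Cons[OF wf] is_path_def)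
    obtain es1 e1 where ee: "es = es1 @ [e1]" using Cons by (metis rev_exhaust list.distinct(1))
    have "(lpath G p :: ('v,'e,'k) lpa) = foldr (\<lambda>e acc. lmul G (lcls G (mono [GE e])) acc) es1 (lcls G (mono [GE e1]))"
      using ee by (simp add: p lpath_def)
    also have "\<dots> = lcls G (mono (map GE es1 @ [GE e1]))"
      by (rule lpath_foldr) (use es ee in auto)
    also have "\<dots> = lcls G (mono (map GE es))" by (simp add: ee)
    also have "\<dots> = lcls G (mono (pw p))"
    proof (rule lcls_eq)
      have "weqv (map GE es) (pw p)"
        by (rule weq_ctxI[OF weq_sym[OF r_VE[OF e(1)]], of "[]" "map GE es'"]) (insert e es v Cons, auto simp: p pw_def)
      then show "eqv G (mono (map GE es) :: ('v,'e,'k) fa) (mono (pw p))" by (simp add: weq_def)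
    qed
    finally show ?thesis .
  qed
qed

lemma tau_weq: "weqv a b \<Longrightarrow> tau G t (mono a) = tau G t (mono b)"
  by (simp add: weq_def tau_def lcls_eq)
lemma tau_wz: "wzr a \<Longrightarrow> tau G t (mono a) = 0"
  by (simp add: wz_def tau_def lcls_eq tau_fzero[unfolded tau_def])

end

locale tctx2 = tctx +
  assumes can: "lpa_trace_canonical G cj t"
begin

lemma canon: assumes "is_path G p" "is_path G q" "path_range G p = path_range G q"
  shows "tau G t (mono (pw p @ wstar (pw q))) = (if p = q then tau G t (mono [GV (path_range G p)]) else 0)"
proof -
  have vp: "vw G (pw p)" "vw G (pw q)" using vw_pw[OF assms(1)] vw_pw[OF assms(2)] by auto
  have "lmul G (lpath G p) (lstar G cj (lpath G q)) = lcls G (mono (pw p @ wstar (pw q)))"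
    using vp by (simp add: lpath_pw assms lstar_lcls cj mono_FA pw_def fstar_mono lmul_lcls fmul_mono)
  then show ?thesis using can assms unfolding lpa_trace_canonical_def tau_def lvert_def by metis
qed

end


definition pext :: "('v \<times> 'e list) \<times> ('v \<times> 'e list) \<Rightarrow> 'e list \<Rightarrow> ('v \<times> 'e list) \<times> ('v \<times> 'e list)" where
  "pext x cs = ((fst (fst x), snd (fst x) @ cs), (fst (snd x), snd (snd x) @ cs))"

definition anc :: "('v \<times> 'e list) \<times> ('v \<times> 'e list) \<Rightarrow> ('v \<times> 'e list) \<times> ('v \<times> 'e list) \<Rightarrow> bool" where
  "anc x y \<longleftrightarrow> (\<exists>cs. y = pext x cs)"

definition Tval :: "('v,'e) pre_digraph \<Rightarrow> (('v,'e,'k::field) lpa \<Rightarrow> 'r::ring) \<Rightarrow> ('v \<times> 'e list) \<times> ('v \<times> 'e list) \<Rightarrow> 'r" where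
  "Tval G t z = tau G t (mono [GV (path_range G (fst z))])"

context tctx2 begin

lemma tau_cw: assumes "vpair G x" "vpair G y"
  shows "tau G t (mono (cw x @ wstar (cw y))) = (if anc x y then Tval G t y else if anc y x then Tval G t x else 0)"
proof -
  obtain ux esx ux' fsx where x: "x = ((ux,esx),(ux',fsx))" by (metis prod.exhaust)
  obtain uy esy uy' fsy where y: "y = ((uy,esy),(uy',fsy))" by (metis prod.exhaust)
  have px: "is_path G (ux,esx)" "is_path G (ux',fsx)" "path_range G (ux,esx) = path_range G (ux',fsx)"
    using assms(1) x by (auto simp: vpair_def)
  have py: "is_path G (uy,esy)" "is_path G (uy',fsy)" "path_range G (uy,esy) = path_range G (uy',fsy)"
    using assms(2) y by (auto simp: vpair_def)
  have vs: "ux \<in> verts G" "ux' \<in> verts G" "uy \<in> verts G" "uy' \<in> verts G"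
    using px py is_path_verts by force+
  have as: "set esx \<subseteq> arcs G" "set fsx \<subseteq> arcs G" "set esy \<subseteq> arcs G" "set fsy \<subseteq> arcs G"
    using px py is_path_arcs by metis+
  have vpx: "vw G (pw (ux,esx))" "vw G (pw (uy,esy))" using px py vw_pw by auto
  have W: "cw x @ wstar (cw y) = (pw (ux,esx) @ map GG (rev fsx)) @ [GV ux', GV uy'] @ (map GE fsy @ wstar (pw (uy,esy)))"
    by (simp add: x y cw_def pw_def wstar_Cons)
  have anc_xy: "anc x y \<longleftrightarrow> (\<exists>cs. esy = esx @ cs \<and> fsy = fsx @ cs \<and> uy = ux \<and> uy' = ux')"
    by (auto simp: anc_def pext_def x y)
  have anc_yx: "anc y x \<longleftrightarrow> (\<exists>cs. esx = esy @ cs \<and> fsx = fsy @ cs \<and> uy = ux \<and> uy' = ux')"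
    by (auto simp: anc_def pext_def x y)
  have Tx: "Tval G t x = tau G t (mono [GV (path_range G (ux,esx))])" by (simp add: Tval_def x)
  have Ty: "Tval G t y = tau G t (mono [GV (path_range G (uy,esy))])" by (simp add: Tval_def y)
  show ?thesis
  proof (cases "ux' = uy'")
    case False
    have "wzr (cw x @ wstar (cw y))"
      by (rule wz_ctxI[OF r_VVz[of ux' uy'], of "pw (ux,esx) @ map GG (rev fsx)" "map GE fsy @ wstar (pw (uy,esy))"])
        (insert vs as vpx False, auto simp: W)
    then show ?thesis using False anc_xy anc_yx tau_wz by auto
  next
    case True
    define v where "v = ux'"
    have W2: "weqv (cw x @ wstar (cw y)) (pw (ux,esx) @ M v fsx fsy @ wstar (pw (uy,esy)))"
      by (rule weq_ctxI[OF r_VV[of ux'], of "pw (ux,esx) @ map GG (rev fsx)" "map GE fsy @ wstar (pw (uy,esy))"])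
        (insert vs as vpx True, auto simp: W v_def M_def)
    have q1: "is_path G (v, fsx)" and q2: "is_path G (v, fsy)" using px py True by (auto simp: v_def)
    note L = L1[OF q1 q2]
    consider (a) cs where "fsy = fsx @ cs" | (b) cs where "fsx = fsy @ cs"
      | (c) "\<forall>cs. fsy \<noteq> fsx @ cs" "\<forall>cs. fsx \<noteq> fsy @ cs" by blast
    then show ?thesis
    proof cases
      case a
      let ?r = "path_range G (v, fsx)"
      have r: "?r = path_range G (ux, esx)" using px(3) v_def True by simp
      have pc: "is_path G (?r, cs)" using q2 a is_path_append[OF wf] by auto
      have pxc: "is_path G (ux, esx @ cs)" using px(1) pc r is_path_append[OF wf] by auto
      have vpc: "vw G (pw (?r, cs))" using pc vw_pw by auto
      have s1: "weqv (pw (ux,esx) @ M v fsx fsy @ wstar (pw (uy,esy))) (pw (ux,esx) @ pw (?r, cs) @ wstar (pw (uy,esy)))"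
        by (rule weq_ctxI[OF L[THEN conjunct1, rule_format, OF a], of "pw (ux,esx)" "wstar (pw (uy,esy))"])
          (insert vpx vpc vs as, auto simp: M_def pw_def v_def)
      have s2: "weqv (pw (ux,esx) @ pw (?r, cs) @ wstar (pw (uy,esy))) (pw (ux, esx @ cs) @ wstar (pw (uy,esy)))"
        by (rule weq_ctxI[OF pw_append[OF pxc], of "[]" "wstar (pw (uy,esy))"])
          (insert vpx vpc vw_pw[OF pxc], auto simp: r pw_def)
      have rr: "path_range G (ux, esx @ cs) = path_range G (uy, esy)"
        using py(3) a True r by (simp add: path_range_append v_def)
      have "tau G t (mono (cw x @ wstar (cw y))) = tau G t (mono (pw (ux, esx @ cs) @ wstar (pw (uy,esy))))"
        using W2 s1 s2 by (metis tau_weq weq_trans)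
      also have "\<dots> = (if (ux, esx @ cs) = (uy, esy) then tau G t (mono [GV (path_range G (ux, esx @ cs))]) else 0)"
        by (rule canon[OF pxc py(1) rr])
      finally have eq: "tau G t (mono (cw x @ wstar (cw y))) = (if (ux, esx @ cs) = (uy, esy) then tau G t (mono [GV (path_range G (ux, esx @ cs))]) else 0)" .
      have c1: "anc x y \<longleftrightarrow> (ux, esx @ cs) = (uy, esy)" using anc_xy a True by auto
      have c2: "\<not> anc x y \<Longrightarrow> \<not> anc y x"
      proof
        assume "\<not> anc x y" "anc y x"
        then obtain cs' where "esx = esy @ cs'" "fsx = fsy @ cs'" "uy = ux" using anc_yx by auto
        with a have "cs = []" "cs' = []" by auto
        with \<open>esx = esy @ cs'\<close> \<open>uy = ux\<close> c1 \<open>\<not> anc x y\<close> show False by auto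
      qed
      show ?thesis using eq c1 c2 Ty by (auto simp: rr)
    next
      case b
      let ?r = "path_range G (v, fsy)"
      have r: "?r = path_range G (uy, esy)" using py(3) v_def True by simp
      have pc: "is_path G (?r, cs)" using q1 b is_path_append[OF wf] by auto
      have pyc: "is_path G (uy, esy @ cs)" using py(1) pc r is_path_append[OF wf] by auto
      have vpc: "vw G (pw (?r, cs))" using pc vw_pw by auto
      have s1: "weqv (pw (ux,esx) @ M v fsx fsy @ wstar (pw (uy,esy))) (pw (ux,esx) @ wstar (pw (?r, cs)) @ wstar (pw (uy,esy)))"
        by (rule weq_ctxI[OF L[THEN conjunct2, THEN conjunct1, rule_format, OF b], of "pw (ux,esx)" "wstar (pw (uy,esy))"])
          (insert vpx vpc vs as, auto simp: M_def pw_def wstar_Cons v_def)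
      have s2: "weqv (pw (ux,esx) @ wstar (pw (?r, cs)) @ wstar (pw (uy,esy))) (pw (ux,esx) @ wstar (pw (uy, esy @ cs)))"
        by (rule weq_ctxI[OF weq_star[OF pw_append[OF pyc]], of "pw (ux,esx)" "[]"])
          (insert vpx vpc vw_pw[OF pyc], auto simp: r pw_def wstar_Cons)
      have rr: "path_range G (ux, esx) = path_range G (uy, esy @ cs)"
        using px(3) b True r by (simp add: path_range_append v_def)
      have "tau G t (mono (cw x @ wstar (cw y))) = tau G t (mono (pw (ux, esx) @ wstar (pw (uy,esy @ cs))))"
        using W2 s1 s2 by (metis tau_weq weq_trans)
      also have "\<dots> = (if (ux, esx) = (uy, esy @ cs) then tau G t (mono [GV (path_range G (ux, esx))]) else 0)"
        by (rule canon[OF px(1) pyc rr])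
      finally have eq: "tau G t (mono (cw x @ wstar (cw y))) = (if (ux, esx) = (uy, esy @ cs) then tau G t (mono [GV (path_range G (ux, esx))]) else 0)" .
      have c1: "anc y x \<longleftrightarrow> (ux, esx) = (uy, esy @ cs)" using anc_yx b True by auto
      have c2: "anc x y \<Longrightarrow> x = y \<and> (ux, esx) = (uy, esy @ cs)"
      proof -
        assume "anc x y"
        then obtain cs' where "esy = esx @ cs'" "fsy = fsx @ cs'" "uy = ux" using anc_xy by auto
        with b have "cs = []" "cs' = []" by auto
        then show ?thesis using \<open>esy = esx @ cs'\<close> \<open>uy = ux\<close> \<open>fsy = fsx @ cs'\<close> True x y by auto
      qed
      show ?thesis using eq c1 c2 Tx by auto
    next
      case c
      have "wzr (pw (ux,esx) @ M v fsx fsy @ wstar (pw (uy,esy)))"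
        by (rule wz_ctxI[OF L[THEN conjunct2, THEN conjunct2, rule_format], of "pw (ux,esx)" "wstar (pw (uy,esy))"])
          (insert c vpx vs as, auto simp: M_def v_def)
      then have "tau G t (mono (cw x @ wstar (cw y))) = 0" using W2 by (metis wz_weq tau_wz)
      moreover have "\<not> anc x y" "\<not> anc y x" using c anc_xy anc_yx by auto
      ultimately show ?thesis by simp
    qed
  qed
qed

end


definition par :: "('v \<times> 'e list) \<times> ('v \<times> 'e list) \<Rightarrow> (('v \<times> 'e list) \<times> ('v \<times> 'e list)) option" where
  "par z = (if snd (fst z) \<noteq> [] \<and> snd (snd z) \<noteq> [] \<and> last (snd (fst z)) = last (snd (snd z))
     then Some ((fst (fst z), butlast (snd (fst z))), (fst (snd z), butlast (snd (snd z)))) else None)"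

lemma pext_Nil[simp]: "pext x [] = x" by (simp add: pext_def)
lemma pext_pext[simp]: "pext (pext x a) b = pext x (a @ b)" by (simp add: pext_def)

lemma anc_refl[simp]: "anc x x" unfolding anc_def by (rule exI[of _ "[]"]) simp
lemma anc_trans: "anc x y \<Longrightarrow> anc y z \<Longrightarrow> anc x z" unfolding anc_def by auto

lemma anc_len: "anc x y \<Longrightarrow> length (snd (fst x)) \<le> length (snd (fst y))"
  by (auto simp: anc_def pext_def)

lemma anc_antisym: assumes "anc x y" "anc y x" shows "x = y"
proof -
  obtain cs where y: "y = pext x cs" using assms by (auto simp: anc_def)
  obtain cs' where x: "x = pext y cs'" using assms by (auto simp: anc_def)
  have "x = pext x (cs @ cs')" using x y by simp
  then have "snd (fst x) = snd (fst x) @ cs @ cs'" by (metis pext_def fst_conv snd_conv)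
  then have "cs = []" by simp
  then show ?thesis using y by simp
qed

lemma par_pext: "par (pext w [e]) = Some w" by (simp add: par_def pext_def)

lemma par_SomeD: "par z = Some w \<Longrightarrow> z = pext w [last (snd (fst z))]"
  apply (cases z)
  apply (auto simp: par_def pext_def split: if_splits)
  apply (metis append_butlast_last_id)+
  done

lemma par_anc: "par z = Some w \<Longrightarrow> anc w z"
  by (metis par_SomeD anc_def)

lemma par_not_anc: "par z = Some w \<Longrightarrow> \<not> anc z w"
proof
  assume "par z = Some w" "anc z w"
  have "z = pext w [last (snd (fst z))]" by (rule par_SomeD[OF \<open>par z = Some w\<close>])
  then have "length (snd (fst w)) < length (snd (fst z))" by (metis length_append_singleton lessI pext_def snd_conv fst_conv)
  with anc_len[OF \<open>anc z w\<close>] show False by simp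
qed

lemma anc_cases: "anc x z \<longleftrightarrow> x = z \<or> (\<exists>w. par z = Some w \<and> anc x w)"
proof
  assume "anc x z"
  then obtain cs where z: "z = pext x cs" by (auto simp: anc_def)
  show "x = z \<or> (\<exists>w. par z = Some w \<and> anc x w)"
  proof (cases cs rule: rev_exhaust)
    case Nil then show ?thesis using z by simp
  next
    case (snoc cs' e)
    then have "z = pext (pext x cs') [e]" using z by simp
    then have "par z = Some (pext x cs')" using par_pext[of "pext x cs'" e] by simp
    moreover have "anc x (pext x cs')" by (auto simp: anc_def)
    ultimately show ?thesis by blast
  qed
next
  assume "x = z \<or> (\<exists>w. par z = Some w \<and> anc x w)"
  then show "anc x z" by (metis anc_refl anc_trans par_anc)
qed

definition mm :: "('v \<times> 'e list) \<times> ('v \<times> 'e list) \<Rightarrow> ('v \<times> 'e list) \<times> ('v \<times> 'e list) \<Rightarrow> (('v \<times> 'e list) \<times> ('v \<times> 'e list)) option" where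
  "mm a b = (if anc a b then Some b else if anc b a then Some a else None)"

lemma ind_split:
  "(anc a z \<and> anc b z) \<longleftrightarrow> (mm a b = Some z \<or> (\<exists>w. par z = Some w \<and> anc a w \<and> anc b w))"
  "\<not> (mm a b = Some z \<and> (\<exists>w. par z = Some w \<and> anc a w \<and> anc b w))"
proof -
  show "(anc a z \<and> anc b z) \<longleftrightarrow> (mm a b = Some z \<or> (\<exists>w. par z = Some w \<and> anc a w \<and> anc b w))"
  proof
    assume H: "anc a z \<and> anc b z"
    show "mm a b = Some z \<or> (\<exists>w. par z = Some w \<and> anc a w \<and> anc b w)"
    proof (cases "a = z")
      case True
      then show ?thesis using H anc_antisym[of a b] unfolding mm_def by auto
    next
      case F1: False
      show ?thesis
      proof (cases "b = z")
        case True
        then show ?thesis using H anc_antisym[of a b] unfolding mm_def by auto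
      next
      case False
      then show ?thesis using H F1 anc_cases[of a z] anc_cases[of b z] by auto
    qed
    qed
  next
    assume "mm a b = Some z \<or> (\<exists>w. par z = Some w \<and> anc a w \<and> anc b w)"
    then show "anc a z \<and> anc b z"
      by (auto simp: mm_def split: if_splits intro: anc_trans par_anc)
  qed
  show "\<not> (mm a b = Some z \<and> (\<exists>w. par z = Some w \<and> anc a w \<and> anc b w))"
    by (auto simp: mm_def split: if_splits dest: par_not_anc)
qed

lemma vpair_anc: assumes wf: "wf_digraph G" and "anc z y" "vpair G y" shows "vpair G z"
proof -
  obtain cs where y: "y = pext z cs" using assms by (auto simp: anc_def)
  obtain u es u' fs where z: "z = ((u,es),(u',fs))" by (metis prod.exhaust)
  have h: "is_path G (u, es @ cs)" "is_path G (u', fs @ cs)" "path_range G (u, es @ cs) = path_range G (u', fs @ cs)"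
    using assms(3) y z by (auto simp: vpair_def pext_def)
  then have p: "is_path G (u,es)" "is_path G (path_range G (u,es), cs)" "is_path G (u',fs)" "is_path G (path_range G (u',fs), cs)"
    by (auto simp: is_path_append[OF wf])
  have "path_range G (u,es) = path_range G (u',fs)"
  proof (cases cs)
    case Nil then show ?thesis using h by simp
  next
    case (Cons c cs')
    then show ?thesis using p(2,4) by (auto simp: is_path_def)
  qed
  then show ?thesis using p z by (simp add: vpair_def)
qed

lemma finite_ancs: "finite {z. anc z y}"
proof -
  obtain u es u' fs where y: "y = ((u,es),(u',fs))" by (metis prod.exhaust)
  have "{z. anc z y} \<subseteq> (\<lambda>(k,l). ((u, take k es), (u', take l fs))) ` ({..length es} \<times> {..length fs})"
  proof
    fix z assume "z \<in> {z. anc z y}"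
    then obtain cs where "y = pext z cs" by (auto simp: anc_def)
    then obtain a b where z: "z = ((u,a),(u',b))" "es = a @ cs" "fs = b @ cs" using y
      by (cases z) (auto simp: pext_def)
    then show "z \<in> (\<lambda>(k,l). ((u, take k es), (u', take l fs))) ` ({..length es} \<times> {..length fs})"
      by (auto intro!: image_eqI[of _ _ "(length a, length b)"])
  qed
  then show ?thesis by (rule finite_subset) auto
qed


context tctx begin

abbreviation rpos :: "'r \<Rightarrow> bool" where "rpos x \<equiv> ring_positive st x"

lemma foldr_shift: "foldr (\<lambda>z acc. z * st z + acc) zs a = foldr (\<lambda>z acc. z * st z + acc) zs 0 + a"
  by (induction zs) (auto simp: add.assoc)

lemma rpos_iff: "rpos x \<longleftrightarrow> (\<exists>zs. x = foldr (\<lambda>z acc. z * st z + acc) zs 0)"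
  by (simp add: is_positive_def)

lemma rpos_0: "rpos 0" unfolding rpos_iff by (rule exI[of _ "[]"]) simp

lemma rpos_add: assumes "rpos a" "rpos b" shows "rpos (a + b)"
proof -
  obtain zs1 where a: "a = foldr (\<lambda>z acc. z * st z + acc) zs1 0" using assms rpos_iff by blast
  obtain zs2 where b: "b = foldr (\<lambda>z acc. z * st z + acc) zs2 0" using assms rpos_iff by blast
  have "a + b = foldr (\<lambda>z acc. z * st z + acc) (zs1 @ zs2) 0"
    using foldr_shift[of zs1 b] by (simp add: a b)
  then show ?thesis unfolding rpos_iff by blast
qed

lemma rpos_sum: "(\<And>i. i \<in> A \<Longrightarrow> rpos (f i)) \<Longrightarrow> rpos (sum f A)"
  by (induction A rule: infinite_finite_induct) (auto simp: rpos_0 rpos_add)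

lemma sm_sq: "sm (b * cj b) (z * st z) = sm b z * st (sm b z)"
proof -
  have A: "\<And>a x y. sm a (x * y) = sm a x * y" "\<And>a x y. sm a (x * y) = x * sm a y" "\<And>a x. st (sm a x) = sm (cj a) (st x)"
    using ia by (auto simp: involutive_algebra_def)
  have "sm b z * st (sm b z) = sm b z * sm (cj b) (st z)" by (simp add: A(3))
  also have "\<dots> = sm (cj b) (sm b z * st z)" by (simp add: A(2))
  also have "\<dots> = sm (cj b) (sm b (z * st z))" by (simp add: A(1))
  also have "\<dots> = sm (cj b * b) (z * st z)" by (simp add: sm_props[OF ia])
  finally show ?thesis by (simp add: mult.commute)
qed

lemma rpos_sm: assumes "rpos x" shows "rpos (sm (b * cj b) x)"
proof -
  obtain zs where x: "x = foldr (\<lambda>z acc. z * st z + acc) zs 0" using assms rpos_iff by blast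
  have "sm (b * cj b) (foldr (\<lambda>z acc. z * st z + acc) zs 0) = foldr (\<lambda>z acc. z * st z + acc) (map (sm b) zs) 0"
    by (induction zs) (auto simp: sm_props(2,5)[OF ia] sm_sq)
  then show ?thesis unfolding rpos_iff x by blast
qed

end

context tctx2 begin

lemma tree_pos:
  assumes P: "\<forall>v\<in>verts G. \<forall>I. I \<subseteq> out_arcs G v \<longrightarrow> finite I \<longrightarrow> rpos (t (lsub G (lvert G v) (lrange_sum G I)))"
    and J: "finite J" and pi: "\<And>i. i \<in> J \<Longrightarrow> vpair G (\<pi> i)"
  shows "rpos (\<Sum>i\<in>J. \<Sum>j\<in>J. sm (c i * cj (c j))
     (if anc (\<pi> i) (\<pi> j) then Tval G t (\<pi> j) else if anc (\<pi> j) (\<pi> i) then Tval G t (\<pi> i) else 0))"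
proof -
  define D where "D = {z. vpair G z \<and> (\<exists>i\<in>J. anc z (\<pi> i))}"
  have finD: "finite D"
  proof (rule finite_subset)
    show "D \<subseteq> (\<Union>i\<in>J. {z. anc z (\<pi> i)})" by (auto simp: D_def)
    show "finite (\<Union>i\<in>J. {z. anc z (\<pi> i)})" using J finite_ancs by blast
  qed
  have piD: "\<pi> i \<in> D" if "i \<in> J" for i using that pi by (auto simp: D_def intro!: bexI[of _ i])
  have parD: "w \<in> D" if "z \<in> D" "par z = Some w" for z w
  proof -
    have "anc w z" using that par_anc by blast
    with that show ?thesis unfolding D_def using vpair_anc[OF wf] anc_trans by blast
  qed
  define T where "T z = Tval G t z" for z
  define kk where "kk i j = c i * cj (c j)" for i j
  define b where "b z = (\<Sum>i\<in>J. if anc (\<pi> i) z then c i else 0)" for z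
  define B2 where "B2 z = b z * cj (b z)" for z
  define Bp where "Bp z = (case par z of None \<Rightarrow> 0 | Some w \<Rightarrow> B2 w)" for z
  have B2_eq: "B2 z = (\<Sum>i\<in>J. \<Sum>j\<in>J. if anc (\<pi> i) z \<and> anc (\<pi> j) z then kk i j else 0)" for z
  proof -
    have "B2 z = (\<Sum>i\<in>J. if anc (\<pi> i) z then c i else 0) * (\<Sum>j\<in>J. cj (if anc (\<pi> j) z then c j else 0))"
      by (simp add: B2_def b_def cj_sum[OF cj])
    also have "\<dots> = (\<Sum>i\<in>J. \<Sum>j\<in>J. (if anc (\<pi> i) z then c i else 0) * cj (if anc (\<pi> j) z then c j else 0))"
      by (rule sum_product)
    also have "\<dots> = (\<Sum>i\<in>J. \<Sum>j\<in>J. if anc (\<pi> i) z \<and> anc (\<pi> j) z then kk i j else 0)"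
      by (intro sum.cong refl) (auto simp: kk_def cj_props[OF cj])
    finally show ?thesis .
  qed
  have Bp_eq: "Bp z = (\<Sum>i\<in>J. \<Sum>j\<in>J. if (\<exists>w. par z = Some w \<and> anc (\<pi> i) w \<and> anc (\<pi> j) w) then kk i j else 0)" for z
  proof (cases "par z")
    case None then show ?thesis by (simp add: Bp_def)
  next
    case (Some w) then show ?thesis by (simp add: Bp_def B2_eq)
  qed
  have diff: "B2 z - Bp z = (\<Sum>i\<in>J. \<Sum>j\<in>J. if mm (\<pi> i) (\<pi> j) = Some z then kk i j else 0)" for z
  proof -
    have "B2 z = (\<Sum>i\<in>J. \<Sum>j\<in>J. (if mm (\<pi> i) (\<pi> j) = Some z then kk i j else 0)
         + (if (\<exists>w. par z = Some w \<and> anc (\<pi> i) w \<and> anc (\<pi> j) w) then kk i j else 0))"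
      unfolding B2_eq
    proof (intro sum.cong refl)
      fix i j
      show "(if anc (\<pi> i) z \<and> anc (\<pi> j) z then kk i j else 0) = (if mm (\<pi> i) (\<pi> j) = Some z then kk i j else 0)
         + (if (\<exists>w. par z = Some w \<and> anc (\<pi> i) w \<and> anc (\<pi> j) w) then kk i j else 0)"
        using ind_split(1)[where a="\<pi> i" and b="\<pi> j" and z=z] ind_split(2)[where a="\<pi> i" and b="\<pi> j" and z=z]
        by auto
    qed
    also have "\<dots> = (\<Sum>i\<in>J. \<Sum>j\<in>J. if mm (\<pi> i) (\<pi> j) = Some z then kk i j else 0) + Bp z"
      by (simp add: Bp_eq sum.distrib)
    finally show ?thesis by simp
  qed
  define V where "V i j = (if anc (\<pi> i) (\<pi> j) then T (\<pi> j) else if anc (\<pi> j) (\<pi> i) then T (\<pi> i) else 0)" for i j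
  have step2: "(\<Sum>i\<in>J. \<Sum>j\<in>J. sm (kk i j) (V i j)) = (\<Sum>z\<in>D. sm (B2 z - Bp z) (T z))"
  proof -
    have "(\<Sum>z\<in>D. sm (B2 z - Bp z) (T z)) = (\<Sum>z\<in>D. \<Sum>i\<in>J. \<Sum>j\<in>J. if mm (\<pi> i) (\<pi> j) = Some z then sm (kk i j) (T z) else 0)"
      unfolding diff sm_sum_left[OF ia] by (intro sum.cong refl) (auto simp: sm_props(1)[OF ia])
    also have "\<dots> = (\<Sum>i\<in>J. \<Sum>j\<in>J. \<Sum>z\<in>D. if mm (\<pi> i) (\<pi> j) = Some z then sm (kk i j) (T z) else 0)"
      by (subst sum.swap) (subst (2) sum.swap, rule refl)
    also have "\<dots> = (\<Sum>i\<in>J. \<Sum>j\<in>J. sm (kk i j) (V i j))"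
    proof (intro sum.cong refl)
      fix i j assume ij: "i \<in> J" "j \<in> J"
      show "(\<Sum>z\<in>D. if mm (\<pi> i) (\<pi> j) = Some z then sm (kk i j) (T z) else 0) = sm (kk i j) (V i j)"
        using piD[OF ij(1)] piD[OF ij(2)] finD
        by (auto simp: mm_def V_def sm_props[OF ia])
    qed
    finally show ?thesis by simp
  qed
  define Iw where "Iw w = {e. pext w [e] \<in> D}" for w
  have step3: "(\<Sum>z\<in>D. sm (Bp z) (T z)) = (\<Sum>w\<in>D. sm (B2 w) (\<Sum>e\<in>Iw w. tau G t (mono [GV (head G e)])))"
  proof -
    define D' where "D' = {z\<in>D. par z \<noteq> None}"
    have "(\<Sum>z\<in>D. sm (Bp z) (T z)) = (\<Sum>z\<in>D'. sm (Bp z) (T z))"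
    proof (rule sum.mono_neutral_right)
      show "finite D" by (rule finD)
      show "D' \<subseteq> D" by (auto simp: D'_def)
      show "\<forall>z\<in>D - D'. sm (Bp z) (T z) = 0"
      proof
        fix z assume "z \<in> D - D'"
        then have "\<not> (par z \<noteq> None)" unfolding D'_def by blast
        then have "par z = None" by blast
        then show "sm (Bp z) (T z) = 0" by (simp add: Bp_def sm_props(1)[OF ia])
      qed
    qed
    also have "\<dots> = (\<Sum>z\<in>D'. sm (B2 (the (par z))) (T z))"
      by (intro sum.cong refl) (auto simp: D'_def Bp_def)
    also have "\<dots> = (\<Sum>w\<in>D. \<Sum>z\<in>{z. z \<in> D' \<and> the (par z) = w}. sm (B2 (the (par z))) (T z))"
      by (rule sum.group[symmetric]) (use finD parD in \<open>auto simp: D'_def\<close>)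
    also have "\<dots> = (\<Sum>w\<in>D. sm (B2 w) (\<Sum>e\<in>Iw w. tau G t (mono [GV (head G e)])))"
    proof (intro sum.cong refl)
      fix w assume w: "w \<in> D"
      have set_eq: "{z. z \<in> D' \<and> the (par z) = w} = (\<lambda>e. pext w [e]) ` Iw w"
      proof
        show "{z. z \<in> D' \<and> the (par z) = w} \<subseteq> (\<lambda>e. pext w [e]) ` Iw w"
        proof
          fix z assume "z \<in> {z. z \<in> D' \<and> the (par z) = w}"
          then have z: "z \<in> D" "par z = Some w" by (auto simp: D'_def)
          have "z = pext w [last (snd (fst z))]" by (rule par_SomeD[OF z(2)])
          then show "z \<in> (\<lambda>e. pext w [e]) ` Iw w" using z by (auto simp: Iw_def intro!: image_eqI)
        qed
        show "(\<lambda>e. pext w [e]) ` Iw w \<subseteq> {z. z \<in> D' \<and> the (par z) = w}"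
        proof
          fix z assume "z \<in> (\<lambda>e. pext w [e]) ` Iw w"
          then obtain e where e: "z = pext w [e]" "pext w [e] \<in> D" by (auto simp: Iw_def)
          have pz: "par z = Some w" using e par_pext by simp
          have "z \<in> D" using e by simp
          moreover have "par z \<noteq> None" using pz by simp
          moreover have "the (par z) = w" using pz by simp
          ultimately show "z \<in> {z. z \<in> D' \<and> the (par z) = w}" unfolding D'_def by blast
        qed
      qed
      have inj: "inj (\<lambda>e. pext w [e])" by (rule injI) (simp add: pext_def)
      have "(\<Sum>z\<in>{z. z \<in> D' \<and> the (par z) = w}. sm (B2 (the (par z))) (T z)) = (\<Sum>e\<in>Iw w. sm (B2 w) (T (pext w [e])))"
        unfolding set_eq by (subst sum.reindex) (auto intro: inj_on_subset[OF inj] simp: par_pext)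
      also have "\<dots> = (\<Sum>e\<in>Iw w. sm (B2 w) (tau G t (mono [GV (head G e)])))"
        by (intro sum.cong refl) (simp add: T_def Tval_def pext_def path_range_def)
      finally show "(\<Sum>z\<in>{z. z \<in> D' \<and> the (par z) = w}. sm (B2 (the (par z))) (T z)) = sm (B2 w) (\<Sum>e\<in>Iw w. tau G t (mono [GV (head G e)]))"
        by (simp add: sm_sum_right[OF ia])
    qed
    finally show ?thesis .
  qed
  have step4: "rpos (T w - (\<Sum>e\<in>Iw w. tau G t (mono [GV (head G e)])))" if w: "w \<in> D" for w
  proof -
    obtain u es u' fs where wp: "w = ((u,es),(u',fs))" by (metis prod.exhaust)
    define r where "r = path_range G (u, es)"
    have vw: "vpair G w" using w by (auto simp: D_def)
    have r: "r \<in> verts G" using vw path_range_verts[OF wf] by (auto simp: vpair_def wp r_def)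
    have inj: "inj (\<lambda>e. pext w [e])" by (rule injI) (simp add: pext_def)
    have finI: "finite (Iw w)" unfolding Iw_def using finite_vimageI[OF finD inj] by (simp add: vimage_def)
    have subI: "Iw w \<subseteq> out_arcs G r"
    proof
      fix e assume "e \<in> Iw w"
      then have "vpair G (pext w [e])" by (auto simp: Iw_def D_def)
      then have "is_path G (u, es @ [e])" by (simp add: vpair_def pext_def wp)
      then have "is_path G (r, [e])" by (simp add: is_path_append[OF wf] r_def)
      then show "e \<in> out_arcs G r" by (simp add: is_path_Cons[OF wf])
    qed
    have heads: "\<And>e. e \<in> Iw w \<Longrightarrow> head G e \<in> verts G" using subI hv by auto
    have lcF: "lc (Iw w) (\<lambda>_. cj 1) (\<lambda>e. mono [GV (head G e)]) \<in> FA G"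
      by (rule lc_FA[OF finI]) (auto intro: mono_FA simp: heads)
    define L :: "('a,'b) gen list \<Rightarrow> 'c" where "L = lc (Iw w) (\<lambda>_. cj 1) (\<lambda>e. mono [GV (head G e)])"
    have Lr: "lrange_sum G (Iw w) = lcls G L" by (simp add: lrange_sum_def L_def lc_def cj_props(2)[OF cj])
    have mr: "mono [GV r] \<in> FA G" using r by (simp add: mono_FA)
    have "t (lsub G (lvert G r) (lrange_sum G (Iw w))) = tau G t (fsub (mono [GV r]) L)"
      unfolding lvert_def Lr tau_def using lsub_lcls[OF mr lcF[folded L_def]] by simp
    also have "\<dots> = tau G t (mono [GV r]) - tau G t L"
      by (rule tau_fsub[OF mr lcF[folded L_def]])
    also have "tau G t L = (\<Sum>e\<in>Iw w. tau G t (mono [GV (head G e)]))"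
      unfolding L_def by (subst tau_lc[OF finI]) (auto simp: mono_FA heads sm_props(7)[OF ia] cj_props(2)[OF cj])
    also have "tau G t (mono [GV r]) = T w" by (simp add: T_def Tval_def wp r_def)
    finally show ?thesis using P r subI finI by metis
  qed
  have "(\<Sum>i\<in>J. \<Sum>j\<in>J. sm (kk i j) (V i j)) = (\<Sum>w\<in>D. sm (B2 w) (T w - (\<Sum>e\<in>Iw w. tau G t (mono [GV (head G e)]))))"
    unfolding step2 by (simp add: sm_props[OF ia] sum_subtractf step3)
  moreover have "rpos (\<Sum>w\<in>D. sm (B2 w) (T w - (\<Sum>e\<in>Iw w. tau G t (mono [GV (head G e)]))))"
    by (rule rpos_sum) (simp add: B2_def rpos_sm step4)
  moreover have TT: "\<And>z. T z = Tval G t z" by (simp add: T_def)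
  ultimately show ?thesis unfolding kk_def V_def TT by simp
qed

end


lemma FA_lc: assumes "f \<in> FA G" shows "f = lc {w. f w \<noteq> 0} f mono"
proof
  fix w
  have "lc {w. f w \<noteq> 0} f mono w = (\<Sum>x\<in>{w. f w \<noteq> 0}. if x = w then f x else 0)"
    by (auto simp: lc_def mono_def intro!: sum.cong)
  also have "\<dots> = f w" using FA_D(2)[OF assms] by simp
  finally show "f w = lc {w. f w \<noteq> 0} f mono w" by simp
qed

context tctx begin

lemma zsq: assumes z: "z \<in> LPA G" shows "lmul G z (lstar G cj z) = lcls G (fmul (lrep z) (fstar cj (lrep z)))"
proof -
  have xz: "lrep z \<in> FA G" "lcls G (lrep z) = z" using z by (auto simp: lrep_FA lcls_lrep)
  have "lstar G cj z = lcls G (fstar cj (lrep z))" using lstar_lcls[OF cj xz(1)] xz(2) by simp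
  then have "lmul G z (lstar G cj z) = lmul G (lcls G (lrep z)) (lcls G (fstar cj (lrep z)))" using xz(2) by simp
  also have "\<dots> = lcls G (fmul (lrep z) (fstar cj (lrep z)))" by (rule lmul_lcls[OF xz(1) fstar_FA[OF cj xz(1)]])
  finally show ?thesis .
qed

lemma pos_foldr:
  assumes "set zs \<subseteq> LPA G" "\<And>z. z \<in> LPA G \<Longrightarrow> rpos (t (lmul G z (lstar G cj z)))"
  shows "foldr (\<lambda>z acc. ladd G (lmul G z (lstar G cj z)) acc) zs (lzero G) \<in> LPA G \<and>
         rpos (t (foldr (\<lambda>z acc. ladd G (lmul G z (lstar G cj z)) acc) zs (lzero G)))"
  using assms(1)
proof (induction zs)
  case Nil
  have "t (lzero G) = 0" using tau_fzero by (simp add: tau_def lzero_def)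
  then show ?case by (simp add: lzero_def lcls_LPA rpos_0)
next
  case (Cons z zs)
  let ?acc = "foldr (\<lambda>z acc. ladd G (lmul G z (lstar G cj z)) acc) zs (lzero G)"
  have z: "z \<in> LPA G" using Cons by simp
  have A: "lmul G z (lstar G cj z) \<in> LPA G"
  proof -
    have "lmul G z (lstar G cj z) = lcls G (fmul (lrep z) (fstar cj (lrep z)))"
      by (rule zsq[OF z])
    then show ?thesis by (simp add: lcls_LPA fmul_FA fstar_FA[OF cj] lrep_FA z)
  qed
  have acc: "?acc \<in> LPA G" "rpos (t ?acc)" using Cons by auto
  have "ladd G (lmul G z (lstar G cj z)) ?acc \<in> LPA G"
    using lcls_LPA[OF fadd_FA[OF lrep_FA[OF A] lrep_FA[OF acc(1)]]] by (simp only: ladd_def)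
  moreover have "t (ladd G (lmul G z (lstar G cj z)) ?acc) = t (lmul G z (lstar G cj z)) + t ?acc"
    using tr A acc(1) by (simp add: lpa_trace_def)
  ultimately show ?case using acc(2) assms(2)[OF z] rpos_add by simp
qed

lemma positive_from_sq:
  assumes "\<And>x. x \<in> FA G \<Longrightarrow> rpos (tau G t (fmul x (fstar cj x)))"
  shows "lpa_trace_positive G cj st t"
  unfolding lpa_trace_positive_def
proof (intro ballI impI)
  fix X assume X: "X \<in> LPA G" "is_positive (LPA G) (ladd G) (lzero G) (lmul G) (lstar G cj) X"
  then obtain zs where zs: "set zs \<subseteq> LPA G" "X = foldr (\<lambda>z acc. ladd G (lmul G z (lstar G cj z)) acc) zs (lzero G)"
    by (auto simp: is_positive_def)
  have "\<And>z. z \<in> LPA G \<Longrightarrow> rpos (t (lmul G z (lstar G cj z)))"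
  proof -
    fix z :: "('v,'e,'k) lpa" assume z: "z \<in> LPA G"
    have "lmul G z (lstar G cj z) = lcls G (fmul (lrep z) (fstar cj (lrep z)))"
      by (rule zsq[OF z])
    then show "rpos (t (lmul G z (lstar G cj z)))" using assms[OF lrep_FA[OF z]] by (simp add: tau_def)
  qed
  then show "rpos (t X)" using pos_foldr[OF zs(1)] zs(2) by simp
qed

end


lemma lc_cong: "(\<And>i. i \<in> A \<Longrightarrow> f i = g i) \<Longrightarrow> lc A c f = lc A c g"
  by (auto simp: lc_def fun_eq_iff intro!: sum.cong)

context tctx2 begin

lemma zz_pos:
  assumes P: "\<forall>v\<in>verts G. \<forall>I. I \<subseteq> out_arcs G v \<longrightarrow> finite I \<longrightarrow> rpos (t (lsub G (lvert G v) (lrange_sum G I)))"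
    and x: "x \<in> FA G"
  shows "rpos (tau G t (fmul x (fstar cj x)))"
proof -
  define S where "S = {w. x w \<noteq> 0}"
  have finS: "finite S" using FA_D(2)[OF x] by (simp add: S_def)
  have Sw: "w \<noteq> [] \<and> vw G w" if "w \<in> S" for w using FA_D(1,3)[OF x] that by (auto simp: S_def)
  define J where "J = {w \<in> S. \<not> wzr w}"
  have finJ: "finite J" using finS by (simp add: J_def)
  define pi where "pi w = (SOME y. vpair G y \<and> weqv w (cw y))" for w
  have piJ: "vpair G (pi w) \<and> weqv w (cw (pi w))" if "w \<in> J" for w
  proof -
    have "\<exists>y. vpair G y \<and> weqv w (cw y)" using nf[of w] Sw that by (auto simp: J_def)
    then show ?thesis unfolding pi_def by (rule someI_ex)
  qed
  define y0 where "y0 = lc J x (\<lambda>w. mono (cw (pi w)))"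
  have y0F: "y0 \<in> FA G" unfolding y0_def
    by (rule lc_FA[OF finJ]) (auto intro!: mono_FA simp: cw_ne vw_cw piJ)
  have e1: "eqv G x y0"
  proof -
    define g :: "('a,'b) gen list \<Rightarrow> ('a,'b) gen list \<Rightarrow> 'c" where "g w = (if wzr w then fzero else mono (cw (pi w)))" for w
    have "eqv G (lc S x mono) (lc S x g)"
    proof (rule eqv_lc[OF finS])
      fix w assume w: "w \<in> S"
      show "eqv G (mono w) (g w)"
      proof (cases "wzr w")
        case True then show ?thesis by (simp add: g_def wz_def)
      next
        case False then have "w \<in> J" using w by (simp add: J_def)
        then show ?thesis using False piJ by (simp add: g_def weq_def)
      qed
    qed
    moreover have "lc S x g = y0"
    proof
      fix v
      have "lc S x g v = (\<Sum>w\<in>S. x w * g w v)" by (simp add: lc_def)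
      also have "\<dots> = (\<Sum>w\<in>J. x w * mono (cw (pi w)) v)"
        by (rule sum.mono_neutral_cong_right[OF finS]) (auto simp: J_def g_def fzero_def)
      finally show "lc S x g v = y0 v" by (simp add: y0_def lc_def)
    qed
    ultimately show ?thesis using FA_lc[OF x] by (simp add: S_def)
  qed
  have xs: "fstar cj x \<in> FA G" by (rule fstar_FA[OF cj x])
  have e2: "eqv G (fstar cj x) (fstar cj y0)" by (rule eqv_fstar[OF cj e1])
  have "tau G t (fmul x (fstar cj x)) = tau G t (fmul y0 (fstar cj y0))"
    by (rule tau_eqv[OF fmul_FA[OF x xs] fmul_FA[OF y0F fstar_FA[OF cj y0F]] eqv_fmul[OF y0F xs e1 e2]])
  also have "fmul y0 (fstar cj y0) = lc J x (\<lambda>i. lc J (\<lambda>j. cj (x j)) (\<lambda>j. mono (cw (pi i) @ wstar (cw (pi j)))))"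
  proof -
    have fs: "fstar cj y0 = lc J (\<lambda>j. cj (x j)) (\<lambda>j. mono (wstar (cw (pi j))))"
      by (simp add: y0_def fstar_lc[OF cj] fstar_mono[OF cj])
    have "fmul y0 (fstar cj y0) = lc J x (\<lambda>i. fmul (mono (cw (pi i))) (fstar cj y0))"
      unfolding y0_def by (rule fmul_lc_left)
    also have "\<dots> = lc J x (\<lambda>i. lc J (\<lambda>j. cj (x j)) (\<lambda>j. mono (cw (pi i) @ wstar (cw (pi j)))))"
      by (simp add: fs fmul_lc_right fmul_mono)
    finally show ?thesis .
  qed
  also have "tau G t \<dots> = (\<Sum>i\<in>J. \<Sum>j\<in>J. sm (x i * cj (x j))
     (if anc (pi i) (pi j) then Tval G t (pi j) else if anc (pi j) (pi i) then Tval G t (pi i) else 0))"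
  proof -
    have F: "mono (cw (pi i) @ wstar (cw (pi j))) \<in> FA G" if "i \<in> J" "j \<in> J" for i j
      using that by (auto intro!: mono_FA simp: cw_ne vw_cw piJ)
    have F2: "lc J (\<lambda>j. cj (x j)) (\<lambda>j. mono (cw (pi i) @ wstar (cw (pi j)))) \<in> FA G" if "i \<in> J" for i
      using that F by (auto intro!: lc_FA[OF finJ])
    have "tau G t (lc J x (\<lambda>i. lc J (\<lambda>j. cj (x j)) (\<lambda>j. mono (cw (pi i) @ wstar (cw (pi j))))))
       = (\<Sum>i\<in>J. sm (x i) (tau G t (lc J (\<lambda>j. cj (x j)) (\<lambda>j. mono (cw (pi i) @ wstar (cw (pi j)))))))"
      by (rule tau_lc[OF finJ F2])
    also have "\<dots> = (\<Sum>i\<in>J. \<Sum>j\<in>J. sm (x i * cj (x j))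
     (if anc (pi i) (pi j) then Tval G t (pi j) else if anc (pi j) (pi i) then Tval G t (pi i) else 0))"
    proof (intro sum.cong refl)
      fix i assume i: "i \<in> J"
      have "tau G t (lc J (\<lambda>j. cj (x j)) (\<lambda>j. mono (cw (pi i) @ wstar (cw (pi j)))))
          = (\<Sum>j\<in>J. sm (cj (x j)) (tau G t (mono (cw (pi i) @ wstar (cw (pi j))))))"
        by (rule tau_lc[OF finJ F[OF i]])
      also have "\<dots> = (\<Sum>j\<in>J. sm (cj (x j)) (if anc (pi i) (pi j) then Tval G t (pi j) else if anc (pi j) (pi i) then Tval G t (pi i) else 0))"
        by (intro sum.cong refl) (simp add: tau_cw piJ i)
      finally show "sm (x i) (tau G t (lc J (\<lambda>j. cj (x j)) (\<lambda>j. mono (cw (pi i) @ wstar (cw (pi j)))))) =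
         (\<Sum>j\<in>J. sm (x i * cj (x j)) (if anc (pi i) (pi j) then Tval G t (pi j) else if anc (pi j) (pi i) then Tval G t (pi i) else 0))"
        by (simp add: sm_sum_right[OF ia] sm_props(6)[OF ia])
    qed
    finally show ?thesis .
  qed
  finally show ?thesis using tree_pos[OF P finJ, of pi x] piJ by simp
qed

end


context tctx begin

lemma easy:
  assumes pos: "lpa_trace_positive G cj st t" and v: "v \<in> verts G" and I: "I \<subseteq> out_arcs G v" "finite I"
  shows "rpos (t (lsub G (lvert G v) (lrange_sum G I)))"
proof -
  have eI: "e \<in> arcs G" "tail G e = v" if "e \<in> I" for e using I that by auto
  define mv :: "('v,'e,'k) fa" where "mv = mono [GV v]"
  define S :: "('v,'e,'k) fa" where "S = lc I (\<lambda>_. 1) (\<lambda>e. mono [GE e, GG e])"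
  define y where "y = fsub mv S"
  have mvF: "mv \<in> FA G" using v by (simp add: mv_def mono_FA)
  have SF: "S \<in> FA G" unfolding S_def by (rule lc_FA[OF I(2)]) (auto intro!: mono_FA simp: eI)
  have yF: "y \<in> FA G" by (simp add: y_def fsub_FA mvF SF)
  have ys: "fstar cj y = y"
  proof -
    have "fstar cj S = S" unfolding S_def
      by (simp add: fstar_lc[OF cj] fstar_mono[OF cj] cj_props(2)[OF cj] wstar_def)
    moreover have "fstar cj mv = mv" by (simp add: mv_def fstar_mono[OF cj] wstar_def)
    ultimately show ?thesis by (simp add: y_def fstar_fsub[OF cj])
  qed
  have m1: "eqv G (fmul mv mv) mv" using r_VV[OF v] by (simp add: mv_def fmul_mono weq_def)
  have m2: "eqv G (fmul mv S) S"
  proof -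
    have A: "fmul mv S = lc I (\<lambda>_. 1) (\<lambda>e. mono ([GV v, GE e, GG e]))" by (simp add: S_def mv_def fmul_lc_right fmul_mono)
    have "eqv G (lc I (\<lambda>_. 1) (\<lambda>e. mono ([GV v, GE e, GG e]))) S" unfolding S_def
    proof (rule eqv_lc[OF I(2)])
      fix e assume e: "e \<in> I"
      have "weqv [GV v, GE e, GG e] [GE e, GG e]"
        by (rule weq_ctxI[OF r_VE[OF eI(1)[OF e]], of "[]" "[GG e]"]) (use eI[OF e] v in auto)
      then show "eqv G (mono [GV v, GE e, GG e] :: ('v,'e,'k) fa) (mono [GE e, GG e])" by (simp add: weq_def)
    qed
    then show ?thesis using A by simp
  qed
  have m3: "eqv G (fmul S mv) S"
  proof -
    have A: "fmul S mv = lc I (\<lambda>_. 1) (\<lambda>e. mono ([GE e, GG e, GV v]))" by (simp add: S_def mv_def fmul_lc_left fmul_mono)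
    have "eqv G (lc I (\<lambda>_. 1) (\<lambda>e. mono ([GE e, GG e, GV v]))) S" unfolding S_def
    proof (rule eqv_lc[OF I(2)])
      fix e assume e: "e \<in> I"
      have "weqv [GE e, GG e, GV v] [GE e, GG e]"
        by (rule weq_ctxI[OF r_GV[OF eI(1)[OF e]], of "[GE e]" "[]"]) (use eI[OF e] v in auto)
      then show "eqv G (mono [GE e, GG e, GV v] :: ('v,'e,'k) fa) (mono [GE e, GG e])" by (simp add: weq_def)
    qed
    then show ?thesis using A by simp
  qed
  have m4: "eqv G (fmul S S) S"
  proof -
    have A: "fmul S S = lc I (\<lambda>_. 1) (\<lambda>e. lc I (\<lambda>_. 1) (\<lambda>f. mono ([GE e, GG e, GE f, GG f])))"
    proof -
      have A0: "fmul S S = lc I (\<lambda>_. 1) (\<lambda>e. fmul (mono [GE e, GG e]) S)" unfolding S_def by (rule fmul_lc_left)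
      show ?thesis by (subst A0) (simp add: S_def fmul_lc_right fmul_mono)
    qed
    have B: "eqv G (lc I (\<lambda>_. 1) (\<lambda>e. lc I (\<lambda>_. 1) (\<lambda>f. mono ([GE e, GG e, GE f, GG f]))) :: ('v,'e,'k) fa) (lc I (\<lambda>_. 1) (\<lambda>e. lc I (\<lambda>_. 1) (\<lambda>f. if e = f then mono [GE e, GG e] else fzero)))"
    proof (rule eqv_lc[OF I(2)])
      fix e assume e: "e \<in> I"
      show "eqv G (lc I (\<lambda>_. 1) (\<lambda>f. mono ([GE e, GG e, GE f, GG f])) :: ('v,'e,'k) fa) (lc I (\<lambda>_. 1) (\<lambda>f. if e = f then mono [GE e, GG e] else fzero))"
      proof (rule eqv_lc[OF I(2)])
        fix f assume f: "f \<in> I"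
        show "eqv G (mono [GE e, GG e, GE f, GG f] :: ('v,'e,'k) fa) (if e = f then mono [GE e, GG e] else fzero)"
        proof (cases "e = f")
          case True
          have "weqv [GE e, GG e, GE e, GG e] [GE e, GV (head G e), GG e]"
            by (rule weq_ctxI[OF r_GE[OF eI(1)[OF e]], of "[GE e]" "[GG e]"]) (use eI[OF e] hv in auto)
          moreover have "weqv [GE e, GV (head G e), GG e] [GE e, GG e]"
            by (rule weq_ctxI[OF r_EV[OF eI(1)[OF e]], of "[]" "[GG e]"]) (use eI[OF e] hv in auto)
          ultimately show ?thesis using True by (simp add: weq_def) (rule eqv_trans)
        next
          case False
          have "wzr [GE e, GG e, GE f, GG f]"
            by (rule wz_ctxI[OF r_GEz[OF eI(1)[OF e] eI(1)[OF f] False], of "[GE e]" "[GG f]"]) (use eI[OF e] eI[OF f] in auto)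
          then show ?thesis using False by (simp add: wz_def)
        qed
      qed
    qed
    have C: "lc I (\<lambda>_. 1) (\<lambda>e. lc I (\<lambda>_. 1) (\<lambda>f. if e = f then mono [GE e, GG e] else fzero)) = (S :: ('v,'e,'k) fa)"
      unfolding S_def
    proof (rule lc_cong)
      fix e assume e: "e \<in> I"
      show "lc I (\<lambda>_. 1) (\<lambda>f. if e = f then mono [GE e, GG e] else fzero) = (mono [GE e, GG e] :: ('v,'e,'k) fa)"
      proof
        fix w
        have "lc I (\<lambda>_. 1) (\<lambda>f. if e = f then mono [GE e, GG e] else fzero) w = (\<Sum>f\<in>I. if e = f then (mono [GE e, GG e] :: ('v,'e,'k) fa) w else 0)"
          by (auto simp: lc_def fzero_def intro!: sum.cong)
        also have "\<dots> = mono [GE e, GG e] w" using e I(2) by simp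
        finally show "lc I (\<lambda>_. 1) (\<lambda>f. if e = f then mono [GE e, GG e] else fzero) w = (mono [GE e, GG e] :: ('v,'e,'k) fa) w" .
      qed
    qed
    show ?thesis using A B C by simp
  qed
  have yy: "eqv G (fmul y (fstar cj y)) y"
  proof -
    have A: "fmul y (fstar cj y) = fsub (fsub (fmul mv mv) (fmul S mv)) (fsub (fmul mv S) (fmul S S))"
      by (subst ys) (simp add: y_def fmul_fsub)
    have B: "eqv G (fsub (fsub (fmul mv mv) (fmul S mv)) (fsub (fmul mv S) (fmul S S))) (fsub (fsub mv S) (fsub S S))"
      by (intro eqv_fsub m1 m2 m3 m4)
    have C: "fsub (fsub mv S) (fsub S S) = y" by (simp add: y_def fsub_def fun_eq_iff)
    show ?thesis using A B C by simp
  qed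
  define Y where "Y = lcls G y"
  have YL: "Y \<in> LPA G" by (simp add: Y_def lcls_LPA yF)
  have "foldr (\<lambda>z acc. ladd G (lmul G z (lstar G cj z)) acc) [Y] (lzero G) = Y"
  proof -
    have "lmul G Y (lstar G cj Y) = lcls G (fmul y (fstar cj y))"
      by (simp add: Y_def lstar_lcls[OF cj yF] lmul_lcls yF fstar_FA[OF cj yF])
    also have "\<dots> = Y" unfolding Y_def by (rule lcls_eq[OF yy])
    finally have "ladd G (lmul G Y (lstar G cj Y)) (lzero G) = ladd G (lcls G y) (lcls G fzero)" by (simp add: Y_def lzero_def)
    also have "\<dots> = lcls G (fadd y fzero)" by (rule ladd_lcls[OF yF fzero_FA])
    also have "fadd y fzero = y" by (simp add: fadd_def fzero_def)
    finally show ?thesis by (simp add: Y_def)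
  qed
  then have "is_positive (LPA G) (ladd G) (lzero G) (lmul G) (lstar G cj) Y"
    unfolding is_positive_def using YL by (intro exI[of _ "[Y]"]) simp
  then have pY: "rpos (t Y)" using pos YL by (simp add: lpa_trace_positive_def)
  have tY: "t Y = tau G t mv - (\<Sum>e\<in>I. tau G t (mono [GV (head G e)] :: ('v,'e,'k) fa))"
  proof -
    have "t Y = tau G t mv - tau G t S" by (simp add: Y_def tau_def[symmetric] y_def tau_fsub mvF SF)
    also have "tau G t S = (\<Sum>e\<in>I. tau G t (mono [GE e, GG e] :: ('v,'e,'k) fa))"
      unfolding S_def by (subst tau_lc[OF I(2)]) (auto intro!: mono_FA simp: eI sm_props(7)[OF ia])
    also have "\<dots> = (\<Sum>e\<in>I. tau G t (mono [GV (head G e)] :: ('v,'e,'k) fa))"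
    proof (intro sum.cong refl)
      fix e assume e: "e \<in> I"
      have a: "e \<in> arcs G" using eI[OF e] by simp
      have "tau G t (mono [GE e, GG e] :: ('v,'e,'k) fa) = tau G t (fmul (mono [GE e]) (mono [GG e]))" by (simp add: fmul_mono)
      also have "\<dots> = tau G t (fmul (mono [GG e]) (mono [GE e]))" by (rule tau_comm) (auto intro!: mono_FA simp: a)
      also have "\<dots> = tau G t (mono [GV (head G e)])" using r_GE[OF a] by (simp add: fmul_mono tau_weq)
      finally show "tau G t (mono [GE e, GG e] :: ('v,'e,'k) fa) = tau G t (mono [GV (head G e)])" .
    qed
    finally show ?thesis .
  qed
  have "t (lsub G (lvert G v) (lrange_sum G I)) = t Y"
  proof -
    define L :: "('v,'e,'k) fa" where "L = lc I (\<lambda>_. 1) (\<lambda>e. mono [GV (head G e)])"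
    have LF: "L \<in> FA G" unfolding L_def by (rule lc_FA[OF I(2)]) (auto intro!: mono_FA simp: eI hv)
    have "lrange_sum G I = lcls G L" by (simp add: lrange_sum_def L_def lc_def)
    then have "t (lsub G (lvert G v) (lrange_sum G I)) = tau G t (fsub mv L)"
      by (simp add: lvert_def tau_def lsub_lcls[OF mvF LF, unfolded mv_def] mv_def)
    also have "\<dots> = tau G t mv - tau G t L" by (rule tau_fsub[OF mvF LF])
    also have "tau G t L = (\<Sum>e\<in>I. tau G t (mono [GV (head G e)] :: ('v,'e,'k) fa))"
      unfolding L_def by (subst tau_lc[OF I(2)]) (auto intro!: mono_FA simp: eI hv sm_props(7)[OF ia])
    finally show ?thesis using tY by simp
  qed
  then show ?thesis using pY by simp
qed

end

theorem theorem3p4: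
  fixes G :: "('v,'e) pre_digraph"
    and cj :: "'k::field \<Rightarrow> 'k"
    and sm :: "'k \<Rightarrow> 'r::ring \<Rightarrow> 'r"
    and st :: "'r \<Rightarrow> 'r"
    and t :: "('v,'e,'k) lpa \<Rightarrow> 'r"
  assumes "wf_digraph G"
    and "field_involution cj"
    and "involutive_algebra cj sm st"
    and "lpa_trace G t"
    and "lpa_trace_K_linear G sm t"
    and "lpa_trace_canonical G cj t"
  shows "lpa_trace_positive G cj st t \<longleftrightarrow>
    (\<forall>v\<in>verts G. \<forall>I. I \<subseteq> out_arcs G v \<longrightarrow> finite I \<longrightarrow>
        ring_positive st (t (lsub G (lvert G v) (lrange_sum G I))))"
proof -
  interpret tctx2 G cj sm st t
    using assms by (simp add: tctx2_def tctx_def tctx2_axioms_def)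
  show ?thesis
  proof
    assume pos: "lpa_trace_positive G cj st t"
    show "\<forall>v\<in>verts G. \<forall>I. I \<subseteq> out_arcs G v \<longrightarrow> finite I \<longrightarrow> ring_positive st (t (lsub G (lvert G v) (lrange_sum G I)))"
      using easy[OF pos] by blast
  next
    assume P: "\<forall>v\<in>verts G. \<forall>I. I \<subseteq> out_arcs G v \<longrightarrow> finite I \<longrightarrow> ring_positive st (t (lsub G (lvert G v) (lrange_sum G I)))"
    show "lpa_trace_positive G cj st t"
      by (rule positive_from_sq) (rule zz_pos[OF P])
  qed
qed


end
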